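(* Let $A$ be a finite-dimensional associative algebra over $K=\mathbb{R}$ or $\mathbb{C}$, let $\mathfrak g$ be a Lie subalgebra of $A_L$, and let $r\in\mathfrak g\wedge\mathfrak g$ satisfy the classical Yang–Baxter equation $[r^{12},r^{13}]+[r^{12},r^{23}]+[r^{13},r^{23}]=0$. Then $\delta(X)=rX-Xr$, $X\in\mathrm{Symm}(A\otimes A)$, defines (via its dual) a quadratic Poisson bracket on $A$ compatible with the multiplication of $A$.
   Context: $A_L$ is the Lie algebra on $A$ with bracket $[a,b]=ab-ba$. $A\otimes A$ is an algebra with componentwise multiplication; $\mathrm{Symm}(A\otimes A)$ are the symmetric tensors. For $r=\sum_i\alpha_i\otimes\beta_i$, $r^{12}=\sum_i\alpha_i\otimes\beta_i\otimes1$, $r^{13}=\sum_i\alpha_i\otimes1\otimes\beta_i$, $r^{23}=\sum_i1\otimes\alpha_i\otimes\beta_i$ with $1$ a formal unit; the commutators only involve Lie brackets in $\mathfrak g$ (e.g. $[a\otimes b\otimes1,c\otimes1\otimes d]=[a,c]\otimes b\otimes d$). The bracket defined by $\delta$ is the one whose values on linear functions are given by the dual map $\delta^*\colon A^*\wedge A^*\to\mathrm{Sym}^2(A^* )$ (identifying $\mathrm{Symm}(A\otimes A)$ with $(\mathrm{Sym}^2A^* )^*$ and $A\wedge A$ with $(A^*\wedge A^* )^*$), extended by the Leibniz rule. Compatibility means the multiplication map $A\times A\to A$ is a Poisson map when $A\times A$ carries the product Poisson structure. *)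

theory Defs
  imports Complex_Main "HOL-Library.Poly_Mapping"
begin

class real_or_complex = field_char_0
instance real :: real_or_complex ..
instance complex :: real_or_complex ..

text \<open>A has basis e_0..e_(n-1); elements are coordinate vectors  nat => K  vanishing
  at indices >= n; the product is given by structure constants
  e_i e_j = sum_k c i j k e_k.\<close>

definition vecs :: "nat \<Rightarrow> (nat \<Rightarrow> 'k::zero) set" where
  "vecs n = {a. \<forall>i\<ge>n. a i = 0}"

definition amul :: "nat \<Rightarrow> (nat \<Rightarrow> nat \<Rightarrow> nat \<Rightarrow> 'k::comm_ring_1) \<Rightarrow> (nat \<Rightarrow> 'k) \<Rightarrow> (nat \<Rightarrow> 'k) \<Rightarrow> nat \<Rightarrow> 'k" where
  "amul n c a b = (\<lambda>k. if k < n then (\<Sum>i<n. \<Sum>j<n. a i * b j * c i j k) else 0)"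

definition assoc_alg :: "nat \<Rightarrow> (nat \<Rightarrow> nat \<Rightarrow> nat \<Rightarrow> 'k::comm_ring_1) \<Rightarrow> bool" where
  "assoc_alg n c \<longleftrightarrow> (\<forall>a\<in>vecs n. \<forall>b\<in>vecs n. \<forall>d\<in>vecs n.
      amul n c (amul n c a b) d = amul n c a (amul n c b d))"

definition lie :: "nat \<Rightarrow> (nat \<Rightarrow> nat \<Rightarrow> nat \<Rightarrow> 'k::comm_ring_1) \<Rightarrow> (nat \<Rightarrow> 'k) \<Rightarrow> (nat \<Rightarrow> 'k) \<Rightarrow> nat \<Rightarrow> 'k" where
  "lie n c a b = (\<lambda>k. amul n c a b k - amul n c b a k)"

definition lie_subalgebra :: "nat \<Rightarrow> (nat \<Rightarrow> nat \<Rightarrow> nat \<Rightarrow> 'k::comm_ring_1) \<Rightarrow> (nat \<Rightarrow> 'k) set \<Rightarrow> bool" where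
  "lie_subalgebra n c G \<longleftrightarrow> G \<subseteq> vecs n \<and> (\<lambda>_. 0) \<in> G
     \<and> (\<forall>a\<in>G. \<forall>b\<in>G. (\<lambda>i. a i + b i) \<in> G) \<and> (\<forall>s. \<forall>a\<in>G. (\<lambda>i. s * a i) \<in> G)
     \<and> (\<forall>a\<in>G. \<forall>b\<in>G. lie n c a b \<in> G)"

text \<open>2-tensors in A (x) A are coefficient arrays  nat => nat => K  w.r.t. e_i (x) e_j.\<close>

text \<open>r \<in> g \<and> g: r lies in g (x) g (a finite sum of alpha_s (x) beta_s with
  alpha_s, beta_s in g) and is skew-symmetric.\<close>
definition in_wedge :: "(nat \<Rightarrow> 'k::comm_ring_1) set \<Rightarrow> (nat \<Rightarrow> nat \<Rightarrow> 'k) \<Rightarrow> bool" where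
  "in_wedge G r \<longleftrightarrow>
     (\<exists>(m::nat) \<alpha> \<beta>. (\<forall>s<m. \<alpha> s \<in> G \<and> \<beta> s \<in> G) \<and> r = (\<lambda>i j. \<Sum>s<m. \<alpha> s i * \<beta> s j))
     \<and> (\<forall>i j. r i j = - r j i)"

definition lc :: "(nat \<Rightarrow> nat \<Rightarrow> nat \<Rightarrow> 'k::comm_ring_1) \<Rightarrow> nat \<Rightarrow> nat \<Rightarrow> nat \<Rightarrow> 'k" where
  "lc c a b k = c a b k - c b a k"

text \<open>Coordinates (w.r.t. e_k (x) e_l (x) e_m) of the three commutators of the CYBE,
  for r = sum_s alpha_s (x) beta_s:
  [r12,r13] = sum [alpha_s,alpha_t] (x) beta_s (x) beta_t,
  [r12,r23] = sum alpha_s (x) [beta_s,alpha_t] (x) beta_t,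
  [r13,r23] = sum alpha_s (x) alpha_t (x) [beta_s,beta_t].\<close>
definition comm_12_13 :: "nat \<Rightarrow> (nat \<Rightarrow> nat \<Rightarrow> nat \<Rightarrow> 'k::comm_ring_1) \<Rightarrow> (nat \<Rightarrow> nat \<Rightarrow> 'k) \<Rightarrow> nat \<Rightarrow> nat \<Rightarrow> nat \<Rightarrow> 'k" where
  "comm_12_13 n c r k l m = (\<Sum>a<n. \<Sum>b<n. r a l * r b m * lc c a b k)"
definition comm_12_23 :: "nat \<Rightarrow> (nat \<Rightarrow> nat \<Rightarrow> nat \<Rightarrow> 'k::comm_ring_1) \<Rightarrow> (nat \<Rightarrow> nat \<Rightarrow> 'k) \<Rightarrow> nat \<Rightarrow> nat \<Rightarrow> nat \<Rightarrow> 'k" where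
  "comm_12_23 n c r k l m = (\<Sum>a<n. \<Sum>b<n. r k a * r b m * lc c a b l)"
definition comm_13_23 :: "nat \<Rightarrow> (nat \<Rightarrow> nat \<Rightarrow> nat \<Rightarrow> 'k::comm_ring_1) \<Rightarrow> (nat \<Rightarrow> nat \<Rightarrow> 'k) \<Rightarrow> nat \<Rightarrow> nat \<Rightarrow> nat \<Rightarrow> 'k" where
  "comm_13_23 n c r k l m = (\<Sum>a<n. \<Sum>b<n. r k a * r l b * lc c a b m)"

definition CYBE :: "nat \<Rightarrow> (nat \<Rightarrow> nat \<Rightarrow> nat \<Rightarrow> 'k::comm_ring_1) \<Rightarrow> (nat \<Rightarrow> nat \<Rightarrow> 'k) \<Rightarrow> bool" where
  "CYBE n c r \<longleftrightarrow> (\<forall>k<n. \<forall>l<n. \<forall>m<n.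
     comm_12_13 n c r k l m + comm_12_23 n c r k l m + comm_13_23 n c r k l m = 0)"

text \<open>Componentwise multiplication in A (x) A: (a (x) b)(a' (x) b') = aa' (x) bb'.\<close>
definition tmul :: "nat \<Rightarrow> (nat \<Rightarrow> nat \<Rightarrow> nat \<Rightarrow> 'k::comm_ring_1) \<Rightarrow> (nat \<Rightarrow> nat \<Rightarrow> 'k) \<Rightarrow> (nat \<Rightarrow> nat \<Rightarrow> 'k) \<Rightarrow> nat \<Rightarrow> nat \<Rightarrow> 'k" where
  "tmul n c X Y = (\<lambda>k l. if k < n \<and> l < n then
     (\<Sum>a<n. \<Sum>b<n. \<Sum>a'<n. \<Sum>b'<n. X a b * Y a' b' * c a a' k * c b b' l) else 0)"

definition symm_tensor :: "nat \<Rightarrow> (nat \<Rightarrow> nat \<Rightarrow> 'k::zero) \<Rightarrow> bool" where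
  "symm_tensor n X \<longleftrightarrow> (\<forall>i j. X i j = X j i) \<and> (\<forall>i j. n \<le> i \<or> n \<le> j \<longrightarrow> X i j = 0)"

definition skew_tensor :: "nat \<Rightarrow> (nat \<Rightarrow> nat \<Rightarrow> 'k::ab_group_add) \<Rightarrow> bool" where
  "skew_tensor n X \<longleftrightarrow> (\<forall>i j. X i j = - X j i) \<and> (\<forall>i j. n \<le> i \<or> n \<le> j \<longrightarrow> X i j = 0)"

definition delta :: "nat \<Rightarrow> (nat \<Rightarrow> nat \<Rightarrow> nat \<Rightarrow> 'k::comm_ring_1) \<Rightarrow> (nat \<Rightarrow> nat \<Rightarrow> 'k) \<Rightarrow> (nat \<Rightarrow> nat \<Rightarrow> 'k) \<Rightarrow> nat \<Rightarrow> nat \<Rightarrow> 'k" where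
  "delta n c r X = (\<lambda>i j. tmul n c r X i j - tmul n c X r i j)"

text \<open>Polynomials in the variables x_0, x_1, ... (x_i = i-th linear coordinate).\<close>
type_synonym 'k mpoly = "(nat \<Rightarrow>\<^sub>0 nat) \<Rightarrow>\<^sub>0 'k"

definition Var :: "nat \<Rightarrow> 'k::comm_ring_1 mpoly" where
  "Var i = Poly_Mapping.single (Poly_Mapping.single i 1) 1"

definition Const :: "'k::comm_ring_1 \<Rightarrow> 'k mpoly" where
  "Const s = Poly_Mapping.single 0 s"

text \<open>Substitution of polynomials for the variables (pull-back along a polynomial map).\<close>
definition subst :: "(nat \<Rightarrow> 'k::comm_ring_1 mpoly) \<Rightarrow> 'k mpoly \<Rightarrow> 'k mpoly" where
  "subst \<sigma> p = (\<Sum>mo\<in>Poly_Mapping.keys p. Const (Poly_Mapping.lookup p mo) * (\<Prod>v\<in>Poly_Mapping.keys mo. (\<sigma> v) ^ (Poly_Mapping.lookup mo v)))"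

text \<open>Symmetric basis tensor S_ab = (e_a (x) e_b + e_b (x) e_a)/2 of Symm(A (x) A);
  every symmetric X equals sum_(a,b) X a b S_ab.\<close>
definition sym_basis :: "nat \<Rightarrow> nat \<Rightarrow> nat \<Rightarrow> nat \<Rightarrow> 'k::field" where
  "sym_basis a b = (\<lambda>i j. ((if i = a \<and> j = b then 1 else 0) + (if i = b \<and> j = a then 1 else 0)) / 2)"

text \<open>With the pairings
  <Q, X> = sum Q a b * X a b  (Q in Sym^2 A^* as symmetric coefficient array, X symmetric) and
  <w, W> = sum w i j * W i j, and x_i \<and> x_j = x_i (x) x_j - x_j (x) x_i,
  the element delta^*(x_i \<and> x_j) has coefficient array dual_delta ... i j.\<close>
definition dual_delta :: "nat \<Rightarrow> (nat \<Rightarrow> nat \<Rightarrow> nat \<Rightarrow> 'k::field) \<Rightarrow> (nat \<Rightarrow> nat \<Rightarrow> 'k) \<Rightarrow> nat \<Rightarrow> nat \<Rightarrow> nat \<Rightarrow> nat \<Rightarrow> 'k" where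
  "dual_delta n c r i j a b = delta n c r (sym_basis a b) i j - delta n c r (sym_basis a b) j i"

text \<open>Quadratic polynomial corresponding to delta^*(x_i \<and> x_j): this is the value of the
  bracket {x_i, x_j} on linear coordinate functions.\<close>
definition lin_bracket :: "nat \<Rightarrow> (nat \<Rightarrow> nat \<Rightarrow> nat \<Rightarrow> 'k::field) \<Rightarrow> (nat \<Rightarrow> nat \<Rightarrow> 'k) \<Rightarrow> nat \<Rightarrow> nat \<Rightarrow> 'k mpoly" where
  "lin_bracket n c r i j = (\<Sum>a<n. \<Sum>b<n. Const (dual_delta n c r i j a b) * Var a * Var b)"

definition poisson_bracket :: "('k::comm_ring_1 mpoly \<Rightarrow> 'k mpoly \<Rightarrow> 'k mpoly) \<Rightarrow> bool" where
  "poisson_bracket B \<longleftrightarrow>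
     (\<forall>p q s. B (p + q) s = B p s + B q s)
   \<and> (\<forall>t p q. B (Const t * p) q = Const t * B p q)
   \<and> (\<forall>p q. B p q = - B q p)
   \<and> (\<forall>p q s. B p (q * s) = B p q * s + q * B p s)
   \<and> (\<forall>p q s. B p (B q s) + B q (B s p) + B s (B p q) = 0)"

text \<open>The bracket on A defined by delta: extends {x_i,x_j} = delta^*(x_i \<and> x_j) (i,j < n);
  variables with index >= n are not coordinates of A and are declared Casimir (bracket 0).\<close>
definition brackets_on_A :: "nat \<Rightarrow> (nat \<Rightarrow> nat \<Rightarrow> nat \<Rightarrow> 'k::field) \<Rightarrow> (nat \<Rightarrow> nat \<Rightarrow> 'k) \<Rightarrow> ('k mpoly \<Rightarrow> 'k mpoly \<Rightarrow> 'k mpoly) \<Rightarrow> bool" where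
  "brackets_on_A n c r B \<longleftrightarrow>
     (\<forall>i j. B (Var i) (Var j) = (if i < n \<and> j < n then lin_bracket n c r i j else 0))"

text \<open>Polynomials on A \<times> A: variables x_0..x_(n-1) (first factor) and x_n..x_(2n-1)
  (second factor). shift moves a polynomial on A to the second factor.\<close>
definition shift :: "nat \<Rightarrow> 'k::comm_ring_1 mpoly \<Rightarrow> 'k mpoly" where
  "shift n = subst (\<lambda>v. Var (n + v))"

definition brackets_on_AxA :: "nat \<Rightarrow> (nat \<Rightarrow> nat \<Rightarrow> nat \<Rightarrow> 'k::field) \<Rightarrow> (nat \<Rightarrow> nat \<Rightarrow> 'k) \<Rightarrow> ('k mpoly \<Rightarrow> 'k mpoly \<Rightarrow> 'k mpoly) \<Rightarrow> bool" where
  "brackets_on_AxA n c r B2 \<longleftrightarrow>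
     (\<forall>i j. B2 (Var i) (Var j) =
        (if i < n \<and> j < n then lin_bracket n c r i j
         else if n \<le> i \<and> i < 2*n \<and> n \<le> j \<and> j < 2*n then shift n (lin_bracket n c r (i - n) (j - n))
         else 0))"

text \<open>Pull-back along the multiplication map m: A \<times> A -> A, (p,q) |-> pq:
  x_k \<circ> m = sum_(i,j) c i j k x_i y_j.\<close>
definition mult_pullback :: "nat \<Rightarrow> (nat \<Rightarrow> nat \<Rightarrow> nat \<Rightarrow> 'k::comm_ring_1) \<Rightarrow> 'k mpoly \<Rightarrow> 'k mpoly" where
  "mult_pullback n c = subst (\<lambda>k. if k < n then (\<Sum>i<n. \<Sum>j<n. Const (c i j k) * Var i * Var (n + j)) else 0)"

end

theory Submission
  imports Defs
begin


abbreviation lk where "lk \<equiv> Poly_Mapping.lookup"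
abbreviation sg where "sg \<equiv> Poly_Mapping.single"

lemma Const_add: "Const (a + b) = Const a + Const b"
  unfolding Const_def by (simp add: single_add)
lemma Const_mult: "Const a * Const b = (Const (a * b) :: 'k::comm_ring_1 mpoly)"
  unfolding Const_def by (simp add: mult_single)
lemma Const_0[simp]: "Const 0 = 0" unfolding Const_def by simp
lemma Const_1[simp]: "Const 1 = 1" unfolding Const_def by simp
lemma Const_uminus: "Const (- a) = - Const a" unfolding Const_def by (simp add: single_uminus)
lemma Const_diff: "Const (a - b) = Const a - Const b" unfolding Const_def by (simp add: single_diff)
lemma Const_sum: "Const (sum f A) = (\<Sum>x\<in>A. Const (f x))"
  by (induction A rule: infinite_finite_induct) (auto simp: Const_add)

lemma update_eq_add:
  assumes "a \<notin> Poly_Mapping.keys f"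
  shows "Poly_Mapping.update a b f = f + sg a b"
  using assms by (intro poly_mapping_eqI) (auto simp: lookup_update lookup_add lookup_single in_keys_iff)

lemma poly_add_induct:
  assumes "P 0" "\<And>m a. P (sg m a)" "\<And>p q. P p \<Longrightarrow> P q \<Longrightarrow> P (p + q)"
  shows "P p"
proof (induction p rule: update_induct)
  case const then show ?case using assms by simp
next
  case (update f a b)
  then show ?case using assms by (simp add: update_eq_add)
qed

lemma single_single_pow: "sg (sg v k) (1::'k::comm_ring_1) = Var v ^ k"
proof (induction k)
  case 0 then show ?case by simp
next
  case (Suc k)
  have "sg (sg v (Suc k)) (1::'k) = sg (sg v 1) 1 * sg (sg v k) 1"
    by (simp add: mult_single single_add[symmetric])
  then show ?case using Suc by (simp add: Var_def)
qed

lemma single_Const: "sg m a = Const a * sg m (1::'k::comm_ring_1)"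
  unfolding Const_def by (simp add: mult_single)

lemma poly_induct:
  fixes p :: "'k::comm_ring_1 mpoly"
  assumes C: "\<And>a. P (Const a)" and V: "\<And>v. P (Var v)"
    and A: "\<And>p q. P p \<Longrightarrow> P q \<Longrightarrow> P (p + q)" and M: "\<And>p q. P p \<Longrightarrow> P q \<Longrightarrow> P (p * q)"
  shows "P p"
proof -
  have pw: "P (Var v ^ k)" for v k
    by (induction k) (use C[of 1] V M in auto)
  have mono: "P (sg m 1)" for m
  proof (induction m rule: update_induct)
    case const then show ?case using C[of 1] by simp
  next
    case (update f a b)
    have "sg (Poly_Mapping.update a b f) (1::'k) = sg f 1 * sg (sg a b) 1"
      using update by (simp add: update_eq_add mult_single)
    then show ?case using update M pw by (simp add: single_single_pow)
  qed
  have sgP: "P (sg m a)" for m a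
  proof -
    have "P (Const a * sg m 1)" using M[OF C mono] .
    then show ?thesis using single_Const[of m a] by simp
  qed
  show ?thesis
    by (rule poly_add_induct) (use C[of 0] A sgP in auto)
qed

section \<open>partial derivatives\<close>

definition pd :: "nat \<Rightarrow> 'k::comm_ring_1 mpoly \<Rightarrow> 'k mpoly" where
  "pd i p = Abs_poly_mapping (\<lambda>m. of_nat (lk m i + 1) * lk p (m + sg i 1))"

lemma lookup_pd: "lk (pd i p) m = of_nat (lk m i + 1) * lk p (m + sg i 1)"
proof -
  have "{m. of_nat (lk m i + 1) * lk p (m + sg i 1) \<noteq> 0} \<subseteq> (\<lambda>m. m + sg i 1) -` Poly_Mapping.keys p"
    by (auto simp: in_keys_iff)
  moreover have "finite ((\<lambda>m. m + sg i (1::nat)) -` Poly_Mapping.keys p)"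
    by (rule finite_vimageI) (auto simp: inj_def)
  ultimately have "finite {m. of_nat (lk m i + 1) * lk p (m + sg i 1) \<noteq> 0}"
    by (rule finite_subset)
  then show ?thesis unfolding pd_def by simp
qed

lemma pd_add: "pd i (p + q) = pd i p + pd i q"
  by (rule poly_mapping_eqI) (simp add: lookup_pd lookup_add algebra_simps)

lemma pd_zero[simp]: "pd i 0 = 0"
  by (rule poly_mapping_eqI) (simp add: lookup_pd)

lemma pd_single: "pd i (sg m a) = sg (m - sg i 1) (of_nat (lk m i) * a)"
proof (rule poly_mapping_eqI)
  fix m'
  show "lk (pd i (sg m a)) m' = lk (sg (m - sg i 1) (of_nat (lk m i) * a)) m'"
  proof (cases "m = m' + sg i 1")
    case True
    then have "m - sg i 1 = m'" by simp
    moreover have "lk m i = lk m' i + 1" using True by (simp add: lookup_add)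
    ultimately show ?thesis using True by (simp add: lookup_pd lookup_single)
  next
    case False
    have "lk (sg (m - sg i 1) (of_nat (lk m i) * a)) m' = 0"
    proof (cases "lk m i = 0")
      case True then show ?thesis by simp
    next
      case False2: False
      have "m - sg i 1 \<noteq> m'"
      proof
        assume "m - sg i 1 = m'"
        then have "m = m' + sg i 1" using False2
          by (auto intro!: poly_mapping_eqI simp: lookup_add lookup_minus lookup_single when_def)
        then show False using False by simp
      qed
      then show ?thesis by (simp add: lookup_single when_def)
    qed
    then show ?thesis using False by (simp add: lookup_pd lookup_single when_def)
  qed
qed

lemma pd_Const[simp]: "pd i (Const a) = 0"
  unfolding Const_def by (simp add: pd_single)

lemma pd_Var: "pd i (Var j) = (if i = j then 1 else 0)"
  unfolding Var_def by (auto simp: pd_single lookup_single)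

lemma pd_single_mult: "pd i (sg m a * sg m' b) = pd i (sg m a) * sg m' b + sg m a * pd i (sg m' b)"
proof -
  have e1: "sg (m - sg i 1) (of_nat (lk m i) * a) * sg m' b = sg (m + m' - sg i 1) (of_nat (lk m i) * a * b)"
  proof (cases "lk m i = 0")
    case True then show ?thesis by simp
  next
    case False
    then have "m - sg i 1 + m' = m + m' - sg i 1"
      by (auto intro!: poly_mapping_eqI simp: lookup_add lookup_minus lookup_single when_def)
    then show ?thesis by (simp add: mult_single)
  qed
  have e2: "sg m a * sg (m' - sg i 1) (of_nat (lk m' i) * b) = sg (m + m' - sg i 1) (of_nat (lk m' i) * a * b)"
  proof (cases "lk m' i = 0")
    case True then show ?thesis by simp
  next
    case False
    then have "m + (m' - sg i 1) = m + m' - sg i 1"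
      by (auto intro!: poly_mapping_eqI simp: lookup_add lookup_minus lookup_single when_def)
    then show ?thesis by (simp add: mult_single mult_ac)
  qed
  have "pd i (sg m a * sg m' b) = sg (m + m' - sg i 1) (of_nat (lk m i) * a * b + of_nat (lk m' i) * a * b)"
    by (simp add: mult_single pd_single lookup_add algebra_simps)
  also have "\<dots> = sg (m + m' - sg i 1) (of_nat (lk m i) * a * b) + sg (m + m' - sg i 1) (of_nat (lk m' i) * a * b)"
    by (rule single_add)
  finally show ?thesis unfolding pd_single e1 e2 .
qed

lemma pd_mult: "pd i (p * q) = pd i p * q + p * pd i q"
proof (induction p rule: poly_add_induct)
  case 1 then show ?case by simp
next
  case (2 m a)
  show ?case
  proof (induction q rule: poly_add_induct)
    case 1 then show ?case by simp
  next
    case (2 m' b) then show ?case by (rule pd_single_mult)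
  next
    case (3 p q) then show ?case by (simp add: distrib_left pd_add algebra_simps)
  qed
next
  case (3 p1 p2) then show ?case by (simp add: distrib_right pd_add algebra_simps)
qed

lemma pd_comm: "pd i (pd j p) = pd j (pd i p)"
proof (rule poly_mapping_eqI)
  fix m :: "nat \<Rightarrow>\<^sub>0 nat"
  have a: "lk (m + sg i 1) j = lk m j + (if i = j then 1 else 0)" "lk (m + sg j 1) i = lk m i + (if i = j then 1 else 0)"
    by (auto simp: lookup_add lookup_single)
  have b: "m + sg i 1 + sg j 1 = m + sg j 1 + sg i 1" by (simp add: ac_simps)
  have c: "lk (pd i (pd j p)) m = of_nat (lk m i + 1) * (of_nat (lk m j + (if i = j then 1 else 0) + 1) * lk p (m + sg j 1 + sg i 1))"
    unfolding lookup_pd a(1) b ..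
  have d: "lk (pd j (pd i p)) m = of_nat (lk m j + 1) * (of_nat (lk m i + (if i = j then 1 else 0) + 1) * lk p (m + sg j 1 + sg i 1))"
    unfolding lookup_pd a(2) ..
  show "lk (pd i (pd j p)) m = lk (pd j (pd i p)) m"
    unfolding c d by (cases "i = j") (simp_all add: mult_ac)
qed

lemma pd_sum: "pd i (sum f A) = (\<Sum>x\<in>A. pd i (f x))"
  by (induction A rule: infinite_finite_induct) (auto simp: pd_add)
lemma pd_uminus: "pd i (- p) = - pd i p"
  using add.inverse_unique[of "pd i p" "pd i (-p)"] pd_add[of i p "-p"] by simp
lemma pd_diff: "pd i (p - q) = pd i p - pd i q"
  using pd_add[of i p "-q"] by (simp add: pd_uminus)
lemma pd_Const_mult: "pd i (Const a * p) = Const a * pd i p"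
  by (simp add: pd_mult)

section \<open>substitution\<close>

definition mon :: "(nat \<Rightarrow> 'k::comm_ring_1 mpoly) \<Rightarrow> (nat \<Rightarrow>\<^sub>0 nat) \<Rightarrow> 'k mpoly" where
  "mon \<sigma> m = (\<Prod>v\<in>Poly_Mapping.keys m. (\<sigma> v) ^ (lk m v))"

lemma subst_alt: "subst \<sigma> p = (\<Sum>mo\<in>Poly_Mapping.keys p. Const (lk p mo) * mon \<sigma> mo)"
  unfolding subst_def mon_def by simp

lemma subst_add: "subst \<sigma> (p + q) = subst \<sigma> p + subst \<sigma> q"
  unfolding subst_alt by (rule setsum_keys_plus_distrib) (auto simp: Const_add algebra_simps)

lemma subst_zero[simp]: "subst \<sigma> 0 = 0" unfolding subst_alt by simp

lemma subst_single: "subst \<sigma> (sg m a) = Const a * mon \<sigma> m"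
  unfolding subst_alt by auto

lemma mon_add: "mon \<sigma> (m + m') = mon \<sigma> m * mon \<sigma> m'"
proof -
  let ?K = "Poly_Mapping.keys m \<union> Poly_Mapping.keys m'"
  have k: "Poly_Mapping.keys (m + m') = ?K"
    by (auto simp: in_keys_iff lookup_add)
  have ext: "mon \<sigma> x = (\<Prod>v\<in>?K. (\<sigma> v) ^ (lk x v))" if "Poly_Mapping.keys x \<subseteq> ?K" for x
    unfolding mon_def by (rule prod.mono_neutral_left) (use that in \<open>auto simp: in_keys_iff\<close>)
  show ?thesis
    by (subst (1 2 3) ext) (auto simp: k lookup_add power_add prod.distrib)
qed

lemma subst_single_mult: "subst \<sigma> (sg m a * sg m' b) = subst \<sigma> (sg m a) * subst \<sigma> (sg m' b)"
  by (simp add: mult_single subst_single mon_add Const_mult[symmetric] mult_ac)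

lemma subst_mult: "subst \<sigma> (p * q) = subst \<sigma> p * subst \<sigma> q"
proof (induction p rule: poly_add_induct)
  case 1 then show ?case by simp
next
  case (2 m a)
  show ?case
  proof (induction q rule: poly_add_induct)
    case 1 then show ?case by simp
  next
    case (2 m' b) then show ?case by (rule subst_single_mult)
  next
    case (3 p q) then show ?case by (simp add: distrib_left subst_add)
  qed
next
  case (3 p1 p2) then show ?case by (simp add: distrib_right subst_add)
qed

lemma subst_Const[simp]: "subst \<sigma> (Const a) = Const a"
proof -
  have "subst \<sigma> (sg 0 a) = Const a * mon \<sigma> 0" by (rule subst_single)
  then show ?thesis by (simp add: mon_def Const_def)
qed

lemma subst_Var[simp]: "subst \<sigma> (Var v) = \<sigma> v"
  unfolding Var_def by (simp add: subst_single mon_def)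

lemma subst_sum: "subst \<sigma> (sum f A) = (\<Sum>x\<in>A. subst \<sigma> (f x))"
  by (induction A rule: infinite_finite_induct) (auto simp: subst_add)
lemma subst_uminus: "subst \<sigma> (- p) = - subst \<sigma> p"
  using add.inverse_unique[of "subst \<sigma> p" "subst \<sigma> (-p)"] subst_add[of \<sigma> p "-p"] by simp
lemma subst_diff: "subst \<sigma> (p - q) = subst \<sigma> p - subst \<sigma> q"
  using subst_add[of \<sigma> p "-q"] by (simp add: subst_uminus)
lemma subst_one[simp]: "subst \<sigma> 1 = 1"
  using subst_Const[of \<sigma> 1] by simp



lemma der_sum:
  fixes D :: "'a::comm_monoid_add \<Rightarrow> 'b::ab_group_add"
  assumes add: "\<And>x y. D (x + y) = D x + D y"
  shows "D (sum g A) = (\<Sum>a\<in>A. D (g a))"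
proof -
  have z: "D 0 = 0" using add[of 0 0] by simp
  show ?thesis by (induction A rule: infinite_finite_induct) (auto simp: z add)
qed


lemma P4: "(\<Sum>i\<in>S. \<Sum>j\<in>S. \<Sum>k\<in>S. \<Sum>l\<in>S. f i j k l) = (\<Sum>l\<in>S. \<Sum>k\<in>S. \<Sum>i\<in>S. \<Sum>j\<in>S. f i j k l)"
proof -
  have "(\<Sum>i\<in>S. \<Sum>j\<in>S. \<Sum>k\<in>S. \<Sum>l\<in>S. f i j k l) = (\<Sum>i\<in>S. \<Sum>j\<in>S. \<Sum>l\<in>S. \<Sum>k\<in>S. f i j k l)"
    by (rule sum.cong[OF refl], rule sum.cong[OF refl], rule sum.swap)
  also have "\<dots> = (\<Sum>i\<in>S. \<Sum>l\<in>S. \<Sum>j\<in>S. \<Sum>k\<in>S. f i j k l)"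
    by (rule sum.cong[OF refl], rule sum.swap)
  also have "\<dots> = (\<Sum>l\<in>S. \<Sum>i\<in>S. \<Sum>j\<in>S. \<Sum>k\<in>S. f i j k l)"
    by (rule sum.swap)
  also have "\<dots> = (\<Sum>l\<in>S. \<Sum>i\<in>S. \<Sum>k\<in>S. \<Sum>j\<in>S. f i j k l)"
    by (rule sum.cong[OF refl], rule sum.cong[OF refl], rule sum.swap)
  also have "\<dots> = (\<Sum>l\<in>S. \<Sum>k\<in>S. \<Sum>i\<in>S. \<Sum>j\<in>S. f i j k l)"
    by (rule sum.cong[OF refl], rule sum.swap)
  finally show ?thesis .
qed

lemma P4b: "(\<Sum>j\<in>S. \<Sum>k\<in>S. \<Sum>l\<in>S. \<Sum>m\<in>S. f j k l m) = (\<Sum>k\<in>S. \<Sum>m\<in>S. \<Sum>j\<in>S. \<Sum>l\<in>S. f j k l m)"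
proof -
  have "(\<Sum>j\<in>S. \<Sum>k\<in>S. \<Sum>l\<in>S. \<Sum>m\<in>S. f j k l m) = (\<Sum>k\<in>S. \<Sum>j\<in>S. \<Sum>l\<in>S. \<Sum>m\<in>S. f j k l m)"
    by (rule sum.swap)
  also have "\<dots> = (\<Sum>k\<in>S. \<Sum>j\<in>S. \<Sum>m\<in>S. \<Sum>l\<in>S. f j k l m)"
    by (rule sum.cong[OF refl], rule sum.cong[OF refl], rule sum.swap)
  also have "\<dots> = (\<Sum>k\<in>S. \<Sum>m\<in>S. \<Sum>j\<in>S. \<Sum>l\<in>S. f j k l m)"
    by (rule sum.cong[OF refl], rule sum.swap)
  finally show ?thesis .
qed

lemma P3a: "(\<Sum>i\<in>S. \<Sum>k\<in>S. \<Sum>m\<in>S. f i k m) = (\<Sum>m\<in>S. \<Sum>i\<in>S. \<Sum>k\<in>S. f i k m)"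
proof -
  have "(\<Sum>i\<in>S. \<Sum>k\<in>S. \<Sum>m\<in>S. f i k m) = (\<Sum>i\<in>S. \<Sum>m\<in>S. \<Sum>k\<in>S. f i k m)"
    by (rule sum.cong[OF refl], rule sum.swap)
  also have "\<dots> = (\<Sum>m\<in>S. \<Sum>i\<in>S. \<Sum>k\<in>S. f i k m)" by (rule sum.swap)
  finally show ?thesis .
qed

lemma P3b: "(\<Sum>i\<in>S. \<Sum>k\<in>S. \<Sum>m\<in>S. f i k m) = (\<Sum>k\<in>S. \<Sum>m\<in>S. \<Sum>i\<in>S. f i k m)"
proof -
  have "(\<Sum>i\<in>S. \<Sum>k\<in>S. \<Sum>m\<in>S. f i k m) = (\<Sum>k\<in>S. \<Sum>i\<in>S. \<Sum>m\<in>S. f i k m)"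
    by (rule sum.swap)
  also have "\<dots> = (\<Sum>k\<in>S. \<Sum>m\<in>S. \<Sum>i\<in>S. f i k m)" by (rule sum.cong[OF refl], rule sum.swap)
  finally show ?thesis .
qed

lemma abstract_jacobi:
  fixes F :: "'i \<Rightarrow> 'a::comm_ring_1 \<Rightarrow> 'a" and L :: "'i \<Rightarrow> 'i \<Rightarrow> 'a"
    and C :: "'i \<Rightarrow> 'i \<Rightarrow> 'i \<Rightarrow> 'a" and S :: "'i set"
  assumes add: "\<And>i x y. F i (x + y) = F i x + F i y"
    and mult: "\<And>i x y. F i (x * y) = F i x * y + x * F i y"
    and FL: "\<And>i j k. F k (L i j) = 0"
    and skew: "\<And>i j. L i j = - L j i"
    and comm: "\<And>i j x. i \<in> S \<Longrightarrow> j \<in> S \<Longrightarrow> F i (F j x) - F j (F i x) = (\<Sum>k\<in>S. C i j k * F k x)"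
    and cyb: "\<And>i k m. i \<in> S \<Longrightarrow> k \<in> S \<Longrightarrow> m \<in> S \<Longrightarrow>
       (\<Sum>j\<in>S. \<Sum>l\<in>S. L i j * L k l * C j l m) + (\<Sum>j\<in>S. \<Sum>l\<in>S. L k j * L m l * C j l i)
     + (\<Sum>j\<in>S. \<Sum>l\<in>S. L m j * L i l * C j l k) = 0"
    and br: "\<And>f g. B f g = (\<Sum>i\<in>S. \<Sum>j\<in>S. L i j * (F i f * F j g))"
  shows "B f (B g h) + B g (B h f) + B h (B f g) = 0"
proof -
  note Fs = der_sum[of "F i" for i, OF add]
  have FLx: "F k (L i j * x) = L i j * F k x" for i j k x by (simp add: mult FL)
  define T where "T i k m = (\<Sum>j\<in>S. \<Sum>l\<in>S. L i j * L k l * C j l m)" for i k m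
  define X where "X f g h = (\<Sum>i\<in>S. \<Sum>j\<in>S. \<Sum>k\<in>S. \<Sum>l\<in>S. L i j * L k l * (F i f * F k g * F j (F l h)))" for f g h
  define Y where "Y f g h = (\<Sum>i\<in>S. \<Sum>j\<in>S. \<Sum>k\<in>S. \<Sum>l\<in>S. L i j * L k l * (F i f * F j (F k g) * F l h))" for f g h
  define Z where "Z f g h = (\<Sum>i\<in>S. \<Sum>k\<in>S. \<Sum>m\<in>S. T i k m * (F i f * F k g * F m h))" for f g h
  have e1: "B f (B g h) = Y f g h + X f g h" for f g h
  proof -
    have "B f (B g h) = (\<Sum>i\<in>S. \<Sum>j\<in>S. \<Sum>k\<in>S. \<Sum>l\<in>S. L i j * (F i f * (L k l * (F j (F k g) * F l h + F k g * F j (F l h)))))"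
      by (simp add: br Fs FLx FL mult sum_distrib_left)
    also have "\<dots> = Y f g h + X f g h"
      unfolding X_def Y_def sum.distrib[symmetric] by (intro sum.cong refl) (simp add: algebra_simps)
    finally show ?thesis .
  qed
  have e2: "Y g h f = - (\<Sum>i\<in>S. \<Sum>j\<in>S. \<Sum>k\<in>S. \<Sum>l\<in>S. L i j * L k l * (F i f * F k g * F l (F j h)))" for f g h
  proof -
    have "Y g h f = (\<Sum>l\<in>S. \<Sum>k\<in>S. \<Sum>i\<in>S. \<Sum>j\<in>S. L i j * L k l * (F i g * F j (F k h) * F l f))"
      unfolding Y_def by (rule P4)
    also have "\<dots> = - (\<Sum>i\<in>S. \<Sum>j\<in>S. \<Sum>k\<in>S. \<Sum>l\<in>S. L i j * L k l * (F i f * F k g * F l (F j h)))"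
      unfolding sum_negf[symmetric]
      by (intro sum.cong refl) (subst skew, simp add: mult_ac)
    finally show ?thesis .
  qed
  have e3: "X f g h + Y g h f = Z f g h" for f g h
  proof -
    have "X f g h + Y g h f = (\<Sum>i\<in>S. \<Sum>j\<in>S. \<Sum>k\<in>S. \<Sum>l\<in>S. L i j * L k l * (F i f * F k g * (F j (F l h) - F l (F j h))))"
      unfolding X_def e2 add_uminus_conv_diff sum_subtractf[symmetric]
      by (intro sum.cong refl) (simp only: right_diff_distrib)
    also have "\<dots> = (\<Sum>i\<in>S. \<Sum>j\<in>S. \<Sum>k\<in>S. \<Sum>l\<in>S. \<Sum>m\<in>S. L i j * L k l * C j l m * (F i f * F k g * F m h))"
      by (intro sum.cong refl) (simp add: comm sum_distrib_left mult_ac)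
    also have "\<dots> = (\<Sum>i\<in>S. \<Sum>k\<in>S. \<Sum>m\<in>S. \<Sum>j\<in>S. \<Sum>l\<in>S. L i j * L k l * C j l m * (F i f * F k g * F m h))"
      by (rule sum.cong[OF refl], rule P4b)
    also have "\<dots> = Z f g h"
      unfolding Z_def T_def by (simp add: sum_distrib_right)
    finally show ?thesis .
  qed
  have "B f (B g h) + B g (B h f) + B h (B f g) = Z f g h + Z g h f + Z h f g"
    unfolding e1 e3[symmetric] by (simp add: algebra_simps)
  also have "\<dots> = (\<Sum>i\<in>S. \<Sum>k\<in>S. \<Sum>m\<in>S. (T i k m + T k m i + T m i k) * (F i f * F k g * F m h))"
  proof -
    have a: "Z g h f = (\<Sum>i\<in>S. \<Sum>k\<in>S. \<Sum>m\<in>S. T k m i * (F i f * F k g * F m h))"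
      unfolding Z_def by (subst P3a) (intro sum.cong refl, simp only: mult_ac)
    have b: "Z h f g = (\<Sum>i\<in>S. \<Sum>k\<in>S. \<Sum>m\<in>S. T m i k * (F i f * F k g * F m h))"
      unfolding Z_def by (subst P3b) (intro sum.cong refl, simp only: mult_ac)
    show ?thesis apply (unfold a b) apply (unfold Z_def sum.distrib[symmetric])
      by (intro sum.cong refl) (simp only: distrib_right)

  qed
  also have "\<dots> = 0"
  proof -
    have "\<forall>i\<in>S. \<forall>k\<in>S. \<forall>m\<in>S. T i k m + T k m i + T m i k = 0" using cyb unfolding T_def by blast
    then show ?thesis by simp
  qed
  finally show ?thesis .
qed


definition lvf :: "nat \<Rightarrow> nat \<Rightarrow> (nat \<Rightarrow> nat \<Rightarrow> 'k::comm_ring_1) \<Rightarrow> 'k mpoly \<Rightarrow> 'k mpoly" where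
  "lvf n z M f = (\<Sum>q<n. \<Sum>l<n. Const (M q l) * (Var (z + q) * pd (z + l) f))"

lemma lvf_add: "lvf n z M (f + g) = lvf n z M f + lvf n z M g"
  unfolding lvf_def by (simp add: pd_add sum.distrib[symmetric] algebra_simps)

lemma lvf_mult: "lvf n z M (f * g) = lvf n z M f * g + f * lvf n z M g"
  unfolding lvf_def by (simp add: pd_mult sum_distrib_left sum_distrib_right sum.distrib[symmetric] algebra_simps)

lemma lvf_Const[simp]: "lvf n z M (Const a) = 0"
  unfolding lvf_def by simp

lemma lvf_zero[simp]: "lvf n z M 0 = 0"
  unfolding lvf_def by simp

lemma lvf_Const_mult: "lvf n z M (Const a * f) = Const a * lvf n z M f"
  by (simp add: lvf_mult)

lemma lvf_sum: "lvf n z M (sum g A) = (\<Sum>x\<in>A. lvf n z M (g x))"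
  by (induction A rule: infinite_finite_induct) (auto simp: lvf_add)

lemma lvf_Var: "lvf n z M (Var v) = (if z \<le> v \<and> v < z + n then (\<Sum>q<n. Const (M q (v - z)) * Var (z + q)) else 0)"
proof -
  have "lvf n z M (Var v) = (\<Sum>q<n. \<Sum>l<n. if z + l = v then Const (M q l) * Var (z + q) else 0)"
    unfolding lvf_def by (intro sum.cong refl) (simp add: pd_Var)
  also have "\<dots> = (\<Sum>q<n. if z \<le> v \<and> v < z + n then Const (M q (v - z)) * Var (z + q) else 0)"
  proof (intro sum.cong refl)
    fix q
    show "(\<Sum>l<n. if z + l = v then Const (M q l) * Var (z + q) else 0) = (if z \<le> v \<and> v < z + n then Const (M q (v - z)) * Var (z + q) else 0)"
    proof (cases "z \<le> v \<and> v < z + n")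
      case True
      then have "(\<Sum>l<n. if z + l = v then Const (M q l) * Var (z + q) else 0) = (\<Sum>l<n. if l = v - z then Const (M q l) * Var (z + q) else 0)"
        by (intro sum.cong refl) auto
      then show ?thesis using True by auto
    next
      case False
      then have "\<forall>l\<in>{..<n}. z + l \<noteq> v" by auto
      then show ?thesis using False by (auto intro!: sum.neutral)
    qed
  qed
  finally show ?thesis by (cases "z \<le> v \<and> v < z + n") auto
qed

lemma lvf_lvf: "lvf n z M (lvf n z' N f) =
   (\<Sum>q<n. \<Sum>l<n. \<Sum>q'<n. \<Sum>l'<n. Const (M q l * N q' l') * (if z + l = z' + q' then Var (z + q) * pd (z' + l') f else 0))
 + (\<Sum>q<n. \<Sum>l<n. \<Sum>q'<n. \<Sum>l'<n. Const (M q l * N q' l') * (Var (z + q) * Var (z' + q') * pd (z + l) (pd (z' + l') f)))"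
  unfolding lvf_def sum.distrib[symmetric]
  by (intro sum.cong refl) (simp add: pd_sum pd_mult pd_Var sum_distrib_left sum.distrib[symmetric], intro sum.cong refl, auto simp: algebra_simps Const_mult[symmetric])

lemma P4c: "(\<Sum>a\<in>A. \<Sum>b\<in>B. \<Sum>c\<in>C. \<Sum>d\<in>D. f a b c d) = (\<Sum>c\<in>C. \<Sum>d\<in>D. \<Sum>a\<in>A. \<Sum>b\<in>B. f a b c d)"
proof -
  have "(\<Sum>a\<in>A. \<Sum>b\<in>B. \<Sum>c\<in>C. \<Sum>d\<in>D. f a b c d) = (\<Sum>a\<in>A. \<Sum>c\<in>C. \<Sum>b\<in>B. \<Sum>d\<in>D. f a b c d)"
    by (rule sum.cong[OF refl], rule sum.swap)
  also have "\<dots> = (\<Sum>c\<in>C. \<Sum>a\<in>A. \<Sum>b\<in>B. \<Sum>d\<in>D. f a b c d)" by (rule sum.swap)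
  also have "\<dots> = (\<Sum>c\<in>C. \<Sum>a\<in>A. \<Sum>d\<in>D. \<Sum>b\<in>B. f a b c d)"
    by (rule sum.cong[OF refl], rule sum.cong[OF refl], rule sum.swap)
  also have "\<dots> = (\<Sum>c\<in>C. \<Sum>d\<in>D. \<Sum>a\<in>A. \<Sum>b\<in>B. f a b c d)"
    by (rule sum.cong[OF refl], rule sum.swap)
  finally show ?thesis .
qed

lemma P3c: "(\<Sum>a\<in>A. \<Sum>b\<in>B. \<Sum>c\<in>C. f a b c) = (\<Sum>c\<in>C. \<Sum>a\<in>A. \<Sum>b\<in>B. f a b c)"
proof -
  have "(\<Sum>a\<in>A. \<Sum>b\<in>B. \<Sum>c\<in>C. f a b c) = (\<Sum>a\<in>A. \<Sum>c\<in>C. \<Sum>b\<in>B. f a b c)"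
    by (rule sum.cong[OF refl], rule sum.swap)
  also have "\<dots> = (\<Sum>c\<in>C. \<Sum>a\<in>A. \<Sum>b\<in>B. f a b c)" by (rule sum.swap)
  finally show ?thesis .
qed

lemma lvf_cong: "(\<And>q l. q < n \<Longrightarrow> l < n \<Longrightarrow> M q l = M' q l) \<Longrightarrow> lvf n z M f = lvf n z M' f"
  unfolding lvf_def by (intro sum.cong refl) auto

lemma lvf_diff_mat: "lvf n z M f - lvf n z N f = lvf n z (\<lambda>q l. M q l - N q l) f"
  unfolding lvf_def by (simp add: sum_subtractf[symmetric] Const_diff algebra_simps)

lemma lvf_lin: "lvf n z (\<lambda>q l. \<Sum>k<n. a k * M k q l) f = (\<Sum>k<n. Const (a k) * lvf n z (M k) f)"
proof -
  have "lvf n z (\<lambda>q l. \<Sum>k<n. a k * M k q l) f = (\<Sum>q<n. \<Sum>l<n. \<Sum>k<n. Const (a k) * (Const (M k q l) * (Var (z + q) * pd (z + l) f)))"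
    unfolding lvf_def by (intro sum.cong refl) (simp only: Const_sum sum_distrib_right, simp add: Const_mult[symmetric] mult_ac)
  also have "\<dots> = (\<Sum>k<n. \<Sum>q<n. \<Sum>l<n. Const (a k) * (Const (M k q l) * (Var (z + q) * pd (z + l) f)))"
    by (rule P3c)
  also have "\<dots> = (\<Sum>k<n. Const (a k) * lvf n z (M k) f)"
    unfolding lvf_def by (simp add: sum_distrib_left)
  finally show ?thesis .
qed

lemma lvf_second_sym:
  "(\<Sum>q<n. \<Sum>l<n. \<Sum>q'<n. \<Sum>l'<n. Const (M q l * N q' l') * (Var (z + q) * Var (z' + q') * pd (z + l) (pd (z' + l') f)))
 = (\<Sum>q<n. \<Sum>l<n. \<Sum>q'<n. \<Sum>l'<n. Const (N q l * M q' l') * (Var (z' + q) * Var (z + q') * pd (z' + l) (pd (z + l') f)))"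
  by (subst P4c) (intro sum.cong refl, simp add: pd_comm mult_ac)

lemma lvf_first_same:
  "(\<Sum>q<n. \<Sum>l<n. \<Sum>q'<n. \<Sum>l'<n. Const (M q l * N q' l') * (if z + l = z + q' then Var (z + q) * pd (z + l') f else 0))
   = lvf n z (\<lambda>q l'. \<Sum>l<n. M q l * N l l') f"
proof -
  have "(\<Sum>q<n. \<Sum>l<n. \<Sum>q'<n. \<Sum>l'<n. Const (M q l * N q' l') * (if z + l = z + q' then Var (z + q) * pd (z + l') f else 0))
    = (\<Sum>q<n. \<Sum>l<n. \<Sum>l'<n. Const (M q l * N l l') * (Var (z + q) * pd (z + l') f))"
  proof (rule sum.cong[OF refl], rule sum.cong[OF refl])
    fix q l assume "l \<in> {..<n}"
    then have "(\<Sum>q'<n. \<Sum>l'<n. Const (M q l * N q' l') * (if z + l = z + q' then Var (z + q) * pd (z + l') f else 0))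
       = (\<Sum>q'<n. if q' = l then (\<Sum>l'<n. Const (M q l * N q' l') * (Var (z + q) * pd (z + l') f)) else 0)"
      by (intro sum.cong refl) auto
    also have "\<dots> = (\<Sum>l'<n. Const (M q l * N l l') * (Var (z + q) * pd (z + l') f))"
      using \<open>l \<in> {..<n}\<close> by simp
    finally show "(\<Sum>q'<n. \<Sum>l'<n. Const (M q l * N q' l') * (if z + l = z + q' then Var (z + q) * pd (z + l') f else 0))
       = (\<Sum>l'<n. Const (M q l * N l l') * (Var (z + q) * pd (z + l') f))" .
  qed
  also have "\<dots> = (\<Sum>q<n. \<Sum>l'<n. \<Sum>l<n. Const (M q l * N l l') * (Var (z + q) * pd (z + l') f))"
    by (rule sum.cong[OF refl], rule sum.swap)
  also have "\<dots> = lvf n z (\<lambda>q l'. \<Sum>l<n. M q l * N l l') f"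
    unfolding lvf_def by (simp add: Const_sum sum_distrib_right)
  finally show ?thesis .
qed

lemma lvf_comm_same:
  "lvf n z M (lvf n z N f) - lvf n z N (lvf n z M f) = lvf n z (\<lambda>q l'. \<Sum>l<n. M q l * N l l' - N q l * M l l') f"
proof -
  have "lvf n z M (lvf n z N f) - lvf n z N (lvf n z M f) = lvf n z (\<lambda>q l'. \<Sum>l<n. M q l * N l l') f - lvf n z (\<lambda>q l'. \<Sum>l<n. N q l * M l l') f"
    unfolding lvf_lvf lvf_first_same using lvf_second_sym[where n=n and M=M and N=N and z=z and z'=z and f=f] by simp
  then show ?thesis by (simp add: lvf_diff_mat sum_subtractf)
qed

lemma lvf_comm_disj:
  assumes "z + n \<le> z' \<or> z' + n \<le> z"
  shows "lvf n z M (lvf n z' N f) = lvf n z' N (lvf n z M f)"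
proof -
  have a: "(\<Sum>q<n. \<Sum>l<n. \<Sum>q'<n. \<Sum>l'<n. Const (M q l * N q' l') * (if z + l = z' + q' then Var (z + q) * pd (z' + l') f else 0)) = 0"
    using assms by (intro sum.neutral ballI) auto
  have b: "(\<Sum>q<n. \<Sum>l<n. \<Sum>q'<n. \<Sum>l'<n. Const (N q l * M q' l') * (if z' + l = z + q' then Var (z' + q) * pd (z + l') f else 0)) = 0"
    using assms by (intro sum.neutral ballI) auto
  show ?thesis unfolding lvf_lvf a b using lvf_second_sym[where n=n and M=M and N=N and z=z and z'=z' and f=f] by simp
qed



definition ev :: "nat \<Rightarrow> nat \<Rightarrow> 'k::comm_ring_1" where "ev x = (\<lambda>t. if t = x then 1 else 0)"

lemma amul_ev_left: assumes "i < n" shows "amul n c (ev i) w k = (if k < n then (\<Sum>t<n. w t * c i t k) else 0)"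
proof -
  have "(\<Sum>a<n. \<Sum>b<n. ev i a * w b * c a b k) = (\<Sum>a<n. if a = i then (\<Sum>b<n. w b * c a b k) else 0)"
    by (intro sum.cong refl) (simp add: ev_def)
  then show ?thesis using \<open>i < n\<close> unfolding amul_def by simp
qed

lemma amul_ev_right: assumes "l < n" shows "amul n c w (ev l) k = (if k < n then (\<Sum>u<n. w u * c u l k) else 0)"
proof -
  have "(\<Sum>a<n. \<Sum>b<n. w a * ev l b * c a b k) = (\<Sum>a<n. w a * c a l k)"
  proof (rule sum.cong[OF refl])
    fix a
    have "(\<Sum>b<n. w a * ev l b * c a b k) = (\<Sum>b<n. if b = l then w a * c a b k else 0)"
      by (intro sum.cong refl) (simp add: ev_def)
    then show "(\<Sum>b<n. w a * ev l b * c a b k) = w a * c a l k" using \<open>l < n\<close> by simp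
  qed
  then show ?thesis unfolding amul_def by simp
qed

lemma ev_vecs: "x < n \<Longrightarrow> ev x \<in> vecs n"
  unfolding vecs_def ev_def by auto

lemma assoc_coord:
  assumes "assoc_alg n c" "i < n" "j < n" "l < n" "k < n"
  shows "(\<Sum>u<n. c i j u * c u l k) = (\<Sum>u<n. c j l u * c i u k)"
proof -
  have "amul n c (amul n c (ev i) (ev j)) (ev l) k = amul n c (ev i) (amul n c (ev j) (ev l)) k"
    using assms ev_vecs unfolding assoc_alg_def by metis
  have evs: "(\<Sum>t<n. ev x t * f t) = f x" if "x < n" for x and f :: "nat \<Rightarrow> 'a"
  proof -
    have "(\<Sum>t<n. ev x t * f t) = (\<Sum>t<n. if t = x then f t else 0)" by (intro sum.cong refl) (simp add: ev_def)
    then show ?thesis using that by simp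
  qed
  have evs2: "(\<Sum>t<n. f t * ev x t) = f x" if "x < n" for x and f :: "nat \<Rightarrow> 'a"
    using evs[OF that, of f] by (simp add: mult.commute)
  have "amul n c (amul n c (ev i) (ev j)) (ev l) k = (\<Sum>u<n. amul n c (ev i) (ev j) u * c u l k)"
    using assms by (simp add: amul_ev_right)
  also have "\<dots> = (\<Sum>u<n. c i j u * c u l k)"
    by (intro sum.cong refl) (simp add: amul_ev_left assms evs)
  finally have 1: "amul n c (amul n c (ev i) (ev j)) (ev l) k = (\<Sum>u<n. c i j u * c u l k)" .
  have "amul n c (ev i) (amul n c (ev j) (ev l)) k = (\<Sum>t<n. amul n c (ev j) (ev l) t * c i t k)"
    using assms by (simp add: amul_ev_left)
  also have "\<dots> = (\<Sum>t<n. c j l t * c i t k)"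
    by (intro sum.cong refl) (simp add: amul_ev_right assms evs[of j])
  finally have 2: "amul n c (ev i) (amul n c (ev j) (ev l)) k = (\<Sum>u<n. c j l u * c i u k)" .
  show ?thesis using 1 2 \<open>amul n c (amul n c (ev i) (ev j)) (ev l) k = amul n c (ev i) (amul n c (ev j) (ev l)) k\<close> by simp
qed

definition mat :: "(nat \<Rightarrow> nat \<Rightarrow> nat \<Rightarrow> 'k) \<Rightarrow> bool \<Rightarrow> nat \<Rightarrow> nat \<Rightarrow> nat \<Rightarrow> 'k" where
  "mat c t a = (if t then (\<lambda>q l. c a q l) else (\<lambda>q l. c q a l))"

lemma lc_swap: "lc c a b k = - lc c b a k" unfolding lc_def by simp

lemma lvf_zero_mat: "lvf n z (\<lambda>q l. 0) f = 0" unfolding lvf_def by simp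

lemma mat_comm_same:
  assumes A: "assoc_alg n c" and ij: "i < n" "j < n"
  shows "lvf n z (mat c t i) (lvf n z (mat c t j) f) - lvf n z (mat c t j) (lvf n z (mat c t i) f)
       = (\<Sum>k<n. Const (if t then lc c j i k else lc c i j k) * lvf n z (mat c t k) f)"
proof -
  have "lvf n z (mat c t i) (lvf n z (mat c t j) f) - lvf n z (mat c t j) (lvf n z (mat c t i) f)
     = lvf n z (\<lambda>q l'. \<Sum>l<n. mat c t i q l * mat c t j l l' - mat c t j q l * mat c t i l l') f"
    by (rule lvf_comm_same)
  also have "\<dots> = lvf n z (\<lambda>q l'. \<Sum>k<n. (if t then lc c j i k else lc c i j k) * mat c t k q l') f"
  proof (rule lvf_cong)
    fix q l' assume ql: "q < n" "l' < n"
    show "(\<Sum>l<n. mat c t i q l * mat c t j l l' - mat c t j q l * mat c t i l l') = (\<Sum>k<n. (if t then lc c j i k else lc c i j k) * mat c t k q l')"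
    proof (cases t)
      case True
      have 1: "(\<Sum>l<n. c i q l * c j l l') = (\<Sum>u<n. c j i u * c u q l')" using assoc_coord[OF A, of j i q l'] ij ql by simp
      have 2: "(\<Sum>l<n. c j q l * c i l l') = (\<Sum>u<n. c i j u * c u q l')" using assoc_coord[OF A, of i j q l'] ij ql by simp
      have "(\<Sum>l<n. mat c t i q l * mat c t j l l' - mat c t j q l * mat c t i l l') = (\<Sum>l<n. c i q l * c j l l') - (\<Sum>l<n. c j q l * c i l l')"
        using True by (simp add: mat_def sum_subtractf)
      also have "\<dots> = (\<Sum>k<n. (c j i k - c i j k) * c k q l')" unfolding 1 2 by (simp add: sum_subtractf left_diff_distrib)
      finally show ?thesis using True by (simp add: mat_def lc_def)
    next
      case False
      have 1: "(\<Sum>l<n. c q i l * c l j l') = (\<Sum>u<n. c i j u * c q u l')" using assoc_coord[OF A, of q i j l'] ij ql by simp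
      have 2: "(\<Sum>l<n. c q j l * c l i l') = (\<Sum>u<n. c j i u * c q u l')" using assoc_coord[OF A, of q j i l'] ij ql by simp
      have "(\<Sum>l<n. mat c t i q l * mat c t j l l' - mat c t j q l * mat c t i l l') = (\<Sum>l<n. c q i l * c l j l') - (\<Sum>l<n. c q j l * c l i l')"
        using False by (simp add: mat_def sum_subtractf)
      also have "\<dots> = (\<Sum>k<n. (c i j k - c j i k) * c q k l')" unfolding 1 2 by (simp add: sum_subtractf left_diff_distrib)
      finally show ?thesis using False by (simp add: mat_def lc_def)
    qed
  qed
  also have "\<dots> = (\<Sum>k<n. Const (if t then lc c j i k else lc c i j k) * lvf n z (mat c t k) f)"
    by (rule lvf_lin)
  finally show ?thesis .
qed

lemma mat_comm_LR:
  assumes A: "assoc_alg n c" and ij: "i < n" "j < n"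
  shows "lvf n z (mat c True i) (lvf n z (mat c False j) f) = lvf n z (mat c False j) (lvf n z (mat c True i) f)"
proof -
  have "lvf n z (mat c True i) (lvf n z (mat c False j) f) - lvf n z (mat c False j) (lvf n z (mat c True i) f)
     = lvf n z (\<lambda>q l'. \<Sum>l<n. mat c True i q l * mat c False j l l' - mat c False j q l * mat c True i l l') f"
    by (rule lvf_comm_same)
  also have "\<dots> = lvf n z (\<lambda>q l'. 0) f"
  proof (rule lvf_cong)
    fix q l' assume ql: "q < n" "l' < n"
    have 1: "(\<Sum>l<n. c i q l * c l j l') = (\<Sum>u<n. c q j u * c i u l')" using assoc_coord[OF A, of i q j l'] ij ql by simp
    show "(\<Sum>l<n. mat c True i q l * mat c False j l l' - mat c False j q l * mat c True i l l') = 0"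
      using 1 by (simp add: mat_def sum_subtractf mult.commute)
  qed
  finally show ?thesis by (simp add: lvf_zero_mat)
qed

definition fam :: "nat \<Rightarrow> (nat \<Rightarrow> nat \<Rightarrow> nat \<Rightarrow> 'k::comm_ring_1) \<Rightarrow> (nat \<Rightarrow> nat) \<Rightarrow> (nat \<Rightarrow> bool) \<Rightarrow> nat \<times> nat \<Rightarrow> 'k mpoly \<Rightarrow> 'k mpoly" where
  "fam n c off tp s = lvf n (off (fst s)) (mat c (tp (fst s)) (snd s))"

definition lam :: "(nat \<Rightarrow> nat \<Rightarrow> 'k::comm_ring_1) \<Rightarrow> (nat \<Rightarrow> bool) \<Rightarrow> nat \<times> nat \<Rightarrow> nat \<times> nat \<Rightarrow> 'k mpoly" where
  "lam r tp s t = (if fst s = fst t then Const ((if tp (fst s) then 2 else -2) * r (snd s) (snd t)) else 0)"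

definition cc :: "(nat \<Rightarrow> nat \<Rightarrow> nat \<Rightarrow> 'k::comm_ring_1) \<Rightarrow> (nat \<Rightarrow> bool) \<Rightarrow> nat \<times> nat \<Rightarrow> nat \<times> nat \<Rightarrow> nat \<times> nat \<Rightarrow> 'k mpoly" where
  "cc c tp s t u = (if fst s = fst t \<and> fst t = fst u then Const (if tp (fst s) then lc c (snd t) (snd s) (snd u) else lc c (snd s) (snd t) (snd u)) else 0)"

definition Br :: "nat \<Rightarrow> (nat \<Rightarrow> nat \<Rightarrow> nat \<Rightarrow> 'k::comm_ring_1) \<Rightarrow> (nat \<Rightarrow> nat \<Rightarrow> 'k) \<Rightarrow> nat \<Rightarrow> (nat \<Rightarrow> nat) \<Rightarrow> (nat \<Rightarrow> bool) \<Rightarrow> 'k mpoly \<Rightarrow> 'k mpoly \<Rightarrow> 'k mpoly" where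
  "Br n c r ng off tp f g = (\<Sum>s\<in>{..<ng}\<times>{..<n}. \<Sum>t\<in>{..<ng}\<times>{..<n}. lam r tp s t * (fam n c off tp s f * fam n c off tp t g))"

lemma sum_prod: "(\<Sum>u\<in>A\<times>B. f u) = (\<Sum>a\<in>A. \<Sum>b\<in>B. f (a, b))"
  by (simp add: sum.cartesian_product)

lemma fam_comm:
  assumes A: "assoc_alg n c"
    and offs: "\<forall>g<ng. \<forall>h<ng. g \<noteq> h \<longrightarrow> (off g = off h \<and> tp g \<noteq> tp h) \<or> off g + n \<le> off h \<or> off h + n \<le> off g"
    and s: "s \<in> {..<ng}\<times>{..<n}" and t: "t \<in> {..<ng}\<times>{..<n}"
  shows "fam n c off tp s (fam n c off tp t x) - fam n c off tp t (fam n c off tp s x)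
       = (\<Sum>u\<in>{..<ng}\<times>{..<n}. cc c tp s t u * fam n c off tp u x)"
proof -
  obtain g i where si: "s = (g, i)" "g < ng" "i < n" using s by auto
  obtain h j where tj: "t = (h, j)" "h < ng" "j < n" using t by auto
  have rhs: "(\<Sum>u\<in>{..<ng}\<times>{..<n}. cc c tp s t u * fam n c off tp u x)
     = (if g = h then (\<Sum>k<n. Const (if tp g then lc c j i k else lc c i j k) * fam n c off tp (g, k) x) else 0)"
  proof (cases "g = h")
    case True
    have "(\<Sum>u\<in>{..<ng}\<times>{..<n}. cc c tp s t u * fam n c off tp u x)
        = (\<Sum>g'<ng. if g' = g then (\<Sum>k<n. Const (if tp g then lc c j i k else lc c i j k) * fam n c off tp (g, k) x) else 0)"
      unfolding sum_prod by (intro sum.cong refl) (auto simp: cc_def si tj True cong: if_cong)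
    then show ?thesis using True si by simp
  next
    case False
    then show ?thesis unfolding sum_prod by (simp add: cc_def si tj)
  qed
  show ?thesis
  proof (cases "g = h")
    case True
    then show ?thesis unfolding rhs using mat_comm_same[OF A si(3) tj(3)] by (simp add: fam_def si tj)
  next
    case False
    then have o: "(off g = off h \<and> tp g \<noteq> tp h) \<or> off g + n \<le> off h \<or> off h + n \<le> off g"
      using offs si tj by auto
    have "fam n c off tp s (fam n c off tp t x) = fam n c off tp t (fam n c off tp s x)"
    proof (cases "off g = off h \<and> tp g \<noteq> tp h")
      case True
      then show ?thesis
      proof (cases "tp g")
        case tg: True
        then have "\<not> tp h" using True by simp
        then show ?thesis using mat_comm_LR[OF A si(3) tj(3), of "off g" x] True tg by (simp add: fam_def si tj)
      next
        case tg: False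
        then have "tp h" using True by simp
        then show ?thesis using mat_comm_LR[OF A tj(3) si(3), of "off g" x] True tg by (simp add: fam_def si tj)
      qed
    next
      case False
      then have "off g + n \<le> off h \<or> off h + n \<le> off g" using o by auto
      then show ?thesis using lvf_comm_disj by (simp add: fam_def si tj)
    qed
    then show ?thesis unfolding rhs using False by simp
  qed
qed



definition T0 :: "nat \<Rightarrow> (nat \<Rightarrow> nat \<Rightarrow> nat \<Rightarrow> 'k::comm_ring_1) \<Rightarrow> (nat \<Rightarrow> nat \<Rightarrow> 'k) \<Rightarrow> nat \<Rightarrow> nat \<Rightarrow> nat \<Rightarrow> 'k" where
  "T0 n c r i k m = (\<Sum>j<n. \<Sum>l<n. r i j * r k l * lc c j l m)"

lemma cybe_T0:
  assumes cy: "CYBE n c r" and sk: "\<forall>i j. r i j = - r j i" and ikm: "i < n" "k < n" "m < n"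
  shows "T0 n c r i k m + T0 n c r k m i + T0 n c r m i k = 0"
proof -
  have a: "comm_13_23 n c r i k m = T0 n c r i k m" unfolding comm_13_23_def T0_def ..
  have b: "comm_12_13 n c r i k m = T0 n c r k m i" unfolding comm_12_13_def T0_def
  proof (intro sum.cong refl)
    fix a b
    show "r a k * r b m * lc c a b i = r k a * r m b * lc c a b i"
      using sk[rule_format, of a k] sk[rule_format, of b m] by simp
  qed
  have c: "comm_12_23 n c r i k m = T0 n c r m i k"
  proof -
    have "T0 n c r m i k = (\<Sum>a<n. \<Sum>b<n. r m b * r i a * lc c b a k)"
      unfolding T0_def by (rule sum.swap)
    also have "\<dots> = comm_12_23 n c r i k m" unfolding comm_12_23_def
    proof (intro sum.cong refl)
      fix a b
      show "r m b * r i a * lc c b a k = r i a * r b m * lc c a b k"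
        using sk[rule_format, of m b] lc_swap[of c b a k] by simp
    qed
    finally show ?thesis by simp
  qed
  show ?thesis using cy ikm unfolding CYBE_def a[symmetric] b[symmetric] c[symmetric] by (simp add: algebra_simps)
qed

lemma T_fam:
  assumes g: "g < ng" and h: "h < ng"
  shows "(\<Sum>s'\<in>{..<ng}\<times>{..<n}. \<Sum>t'\<in>{..<ng}\<times>{..<n}. lam r tp (g, i) s' * lam r tp (h, k) t' * cc c tp s' t' (g', m))
    = (if g = h \<and> h = g' then Const ((if tp g then -4 else 4) * T0 n c r i k m) else 0)"
proof -
  have "(\<Sum>s'\<in>{..<ng}\<times>{..<n}. \<Sum>t'\<in>{..<ng}\<times>{..<n}. lam r tp (g, i) s' * lam r tp (h, k) t' * cc c tp s' t' (g', m))
     = (\<Sum>g1<ng. \<Sum>j<n. \<Sum>h1<ng. \<Sum>l<n. lam r tp (g, i) (g1, j) * lam r tp (h, k) (h1, l) * cc c tp (g1, j) (h1, l) (g', m))"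
    by (simp only: sum_prod)
  also have "\<dots> = (\<Sum>g1<ng. if g1 = g then (\<Sum>j<n. \<Sum>l<n. lam r tp (g, i) (g, j) * lam r tp (h, k) (h, l) * cc c tp (g, j) (h, l) (g', m)) else 0)"
  proof (rule sum.cong[OF refl])
    fix g1
    show "(\<Sum>j<n. \<Sum>h1<ng. \<Sum>l<n. lam r tp (g, i) (g1, j) * lam r tp (h, k) (h1, l) * cc c tp (g1, j) (h1, l) (g', m))
      = (if g1 = g then (\<Sum>j<n. \<Sum>l<n. lam r tp (g, i) (g, j) * lam r tp (h, k) (h, l) * cc c tp (g, j) (h, l) (g', m)) else 0)"
    proof (cases "g1 = g")
      case True
      have "(\<Sum>h1<ng. \<Sum>l<n. lam r tp (g, i) (g, j) * lam r tp (h, k) (h1, l) * cc c tp (g, j) (h1, l) (g', m))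
          = (\<Sum>l<n. lam r tp (g, i) (g, j) * lam r tp (h, k) (h, l) * cc c tp (g, j) (h, l) (g', m))" for j
      proof -
        have "(\<Sum>h1<ng. \<Sum>l<n. lam r tp (g, i) (g, j) * lam r tp (h, k) (h1, l) * cc c tp (g, j) (h1, l) (g', m))
          = (\<Sum>h1<ng. if h1 = h then (\<Sum>l<n. lam r tp (g, i) (g, j) * lam r tp (h, k) (h, l) * cc c tp (g, j) (h, l) (g', m)) else 0)"
          by (intro sum.cong refl) (auto simp: lam_def)
        then show ?thesis using h by simp
      qed
      then show ?thesis using True by simp
    next
      case False
      then show ?thesis by (simp add: lam_def)
    qed
  qed
  also have "\<dots> = (\<Sum>j<n. \<Sum>l<n. lam r tp (g, i) (g, j) * lam r tp (h, k) (h, l) * cc c tp (g, j) (h, l) (g', m))"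
    using g by simp
  also have "\<dots> = (if g = h \<and> h = g' then Const ((if tp g then -4 else 4) * T0 n c r i k m) else 0)"
  proof (cases "g = h \<and> h = g'")
    case True
    have "(\<Sum>j<n. \<Sum>l<n. lam r tp (g, i) (g, j) * lam r tp (h, k) (h, l) * cc c tp (g, j) (h, l) (g', m))
       = (\<Sum>j<n. \<Sum>l<n. Const ((if tp g then -4 else 4) * (r i j * r k l * lc c j l m)))"
    proof (intro sum.cong refl)
      fix j l
      show "lam r tp (g, i) (g, j) * lam r tp (h, k) (h, l) * cc c tp (g, j) (h, l) (g', m) = Const ((if tp g then -4 else 4) * (r i j * r k l * lc c j l m))"
        using True lc_swap[of c l j m] by (simp add: lam_def cc_def Const_mult mult.assoc)
    qed
    then show ?thesis using True by (simp add: T0_def Const_sum sum_distrib_left)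
  next
    case False
    then show ?thesis by (auto simp: cc_def lam_def)
  qed
  finally show ?thesis .
qed

lemma fam_add: "fam n c off tp s (x + y) = fam n c off tp s x + fam n c off tp s y"
  unfolding fam_def by (rule lvf_add)
lemma fam_mult: "fam n c off tp s (x * y) = fam n c off tp s x * y + x * fam n c off tp s y"
  unfolding fam_def by (rule lvf_mult)
lemma fam_Const_mult: "fam n c off tp s (Const a * y) = Const a * fam n c off tp s y"
  unfolding fam_def by (rule lvf_Const_mult)
lemma fam_lam: "fam n c off tp s (lam r tp a b) = 0"
  unfolding fam_def lam_def by simp
lemma lam_skew: assumes "\<forall>i j. r i j = - r j i" shows "lam r tp s t = - lam r tp t s"
proof -
  have "r (snd s) (snd t) = - r (snd t) (snd s)" using assms by blast
  then show ?thesis unfolding lam_def by (auto simp: Const_uminus[symmetric])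
qed

lemma Br_poisson:
  assumes A: "assoc_alg n c" and sk: "\<forall>i j. r i j = - r j i" and cy: "CYBE n c r"
    and offs: "\<forall>g<ng. \<forall>h<ng. g \<noteq> h \<longrightarrow> (off g = off h \<and> tp g \<noteq> tp h) \<or> off g + n \<le> off h \<or> off h + n \<le> off g"
  shows "poisson_bracket (Br n c r ng off tp)"
proof -
  let ?S = "{..<ng}\<times>{..<n}"
  let ?F = "fam n c off tp" and ?L = "lam r tp" and ?C = "cc c tp"
  have jac: "Br n c r ng off tp p (Br n c r ng off tp q s) + Br n c r ng off tp q (Br n c r ng off tp s p)
      + Br n c r ng off tp s (Br n c r ng off tp p q) = 0" for p q s
  proof (rule abstract_jacobi[where F = ?F and L = ?L and C = ?C and S = ?S and B = "Br n c r ng off tp"])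
    show "?F i (x + y) = ?F i x + ?F i y" for i x y by (rule fam_add)
    show "?F i (x * y) = ?F i x * y + x * ?F i y" for i x y by (rule fam_mult)
    show "?F k (?L i j) = 0" for i j k by (rule fam_lam)
    show "?L i j = - ?L j i" for i j using sk by (rule lam_skew)
    show "?F i (?F j x) - ?F j (?F i x) = (\<Sum>k\<in>?S. ?C i j k * ?F k x)" if "i \<in> ?S" "j \<in> ?S" for i j x
      using fam_comm[OF A offs that] .
    show "Br n c r ng off tp f g = (\<Sum>i\<in>?S. \<Sum>j\<in>?S. ?L i j * (?F i f * ?F j g))" for f g
      unfolding Br_def ..
    show "(\<Sum>j\<in>?S. \<Sum>l\<in>?S. ?L i j * ?L k l * ?C j l m) + (\<Sum>j\<in>?S. \<Sum>l\<in>?S. ?L k j * ?L m l * ?C j l i)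
     + (\<Sum>j\<in>?S. \<Sum>l\<in>?S. ?L m j * ?L i l * ?C j l k) = 0" if iS: "i \<in> ?S" and kS: "k \<in> ?S" and mS: "m \<in> ?S" for i k m
    proof -
      obtain g i' where i: "i = (g, i')" "g < ng" "i' < n" using iS by (cases i) auto
      obtain h k' where k: "k = (h, k')" "h < ng" "k' < n" using kS by (cases k) auto
      obtain g' m' where m: "m = (g', m')" "g' < ng" "m' < n" using mS by (cases m) auto
      show ?thesis
      proof (cases "g = h \<and> h = g'")
        case True
        have z: "T0 n c r i' k' m' + T0 n c r k' m' i' + T0 n c r m' i' k' = 0"
          using cybe_T0[OF cy sk i(3) k(3) m(3)] .
        have "Const ((if tp g then -4 else 4) * T0 n c r i' k' m') + Const ((if tp g then -4 else 4) * T0 n c r k' m' i')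
           + Const ((if tp g then -4 else 4) * T0 n c r m' i' k') = Const ((if tp g then -4 else 4) * (T0 n c r i' k' m' + T0 n c r k' m' i' + T0 n c r m' i' k'))"
          by (simp add: Const_add[symmetric] algebra_simps)
        also have "\<dots> = 0" using z by simp
        finally show ?thesis using True i(2) k(2) m(2) unfolding i k m by (simp add: T_fam)
      next
        case False
        then show ?thesis unfolding i k m using i k m by (auto simp: T_fam)
      qed
    qed
  qed
  have add: "Br n c r ng off tp (p + q) s = Br n c r ng off tp p s + Br n c r ng off tp q s" for p q s
    unfolding Br_def by (simp add: fam_add sum.distrib[symmetric] algebra_simps)
  have cm: "Br n c r ng off tp (Const t * p) q = Const t * Br n c r ng off tp p q" for t p q
    unfolding Br_def fam_Const_mult by (simp add: sum_distrib_left mult_ac)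
  have skw: "Br n c r ng off tp p q = - Br n c r ng off tp q p" for p q
  proof -
    have "Br n c r ng off tp q p = (\<Sum>t\<in>?S. \<Sum>s\<in>?S. ?L s t * (?F s q * ?F t p))" unfolding Br_def by (rule sum.swap)
    also have "\<dots> = - Br n c r ng off tp p q" unfolding Br_def sum_negf[symmetric]
      by (intro sum.cong refl) (subst lam_skew[OF sk], simp add: mult_ac)
    finally show ?thesis by simp
  qed
  have leib: "Br n c r ng off tp p (q * s) = Br n c r ng off tp p q * s + q * Br n c r ng off tp p s" for p q s
    unfolding Br_def by (simp add: fam_mult sum_distrib_left sum_distrib_right sum.distrib[symmetric] algebra_simps)
  show ?thesis unfolding poisson_bracket_def using jac add cm skw leib by blast
qed



lemma del2:
  fixes a b n :: nat
  assumes "a < n" "b < n"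
  shows "(\<Sum>a'<n. \<Sum>b'<n. if a' = a then (if b' = b then g a' b' else 0) else 0) = (g a b :: 'k::comm_ring_1)"
proof -
  have "(\<Sum>a'<n. \<Sum>b'<n. if a' = a then (if b' = b then g a' b' else 0) else 0) = (\<Sum>a'<n. if a' = a then g a' b else 0)"
  proof (rule sum.cong[OF refl])
    fix a' show "(\<Sum>b'<n. if a' = a then (if b' = b then g a' b' else 0) else 0) = (if a' = a then g a' b else 0)"
      using assms by (cases "a' = a") simp_all
  qed
  then show ?thesis using assms by simp
qed

lemma sym_sum:
  fixes f :: "nat \<Rightarrow> nat \<Rightarrow> 'k::field_char_0"
  assumes "a < n" "b < n"
  shows "(\<Sum>a'<n. \<Sum>b'<n. sym_basis a b a' b' * f a' b') = (f a b + f b a) / 2"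
proof -
  have "(\<Sum>a'<n. \<Sum>b'<n. sym_basis a b a' b' * f a' b')
     = (\<Sum>a'<n. \<Sum>b'<n. ((if a' = a then (if b' = b then f a' b' else 0) else 0) + (if a' = b then (if b' = a then f a' b' else 0) else 0)) / 2)"
    unfolding sym_basis_def by (intro sum.cong refl) (auto simp: field_simps)
  also have "\<dots> = ((\<Sum>a'<n. \<Sum>b'<n. (if a' = a then (if b' = b then f a' b' else 0) else 0)) + (\<Sum>a'<n. \<Sum>b'<n. (if a' = b then (if b' = a then f a' b' else 0) else 0))) / 2"
    by (simp add: sum_divide_distrib[symmetric] sum.distrib)
  also have "\<dots> = (f a b + f b a) / 2"
    using assms by (simp add: del2)
  finally show ?thesis .
qed

lemma tmul_r_sym:
  fixes r :: "nat \<Rightarrow> nat \<Rightarrow> 'k::field_char_0"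
  assumes "a < n" "b < n" "i < n" "j < n"
  shows "tmul n c r (sym_basis a b) i j = ((\<Sum>u<n. \<Sum>v<n. r u v * (c u a i * c v b j)) + (\<Sum>u<n. \<Sum>v<n. r u v * (c u b i * c v a j))) / 2"
proof -
  have "tmul n c r (sym_basis a b) i j = (\<Sum>u<n. \<Sum>v<n. r u v * (\<Sum>a'<n. \<Sum>b'<n. sym_basis a b a' b' * (c u a' i * c v b' j)))"
    unfolding tmul_def using assms by (simp add: sum_distrib_left mult_ac)
  also have "\<dots> = (\<Sum>u<n. \<Sum>v<n. r u v * ((c u a i * c v b j + c u b i * c v a j) / 2))"
    using assms by (simp add: sym_sum)
  also have "\<dots> = ((\<Sum>u<n. \<Sum>v<n. r u v * (c u a i * c v b j)) + (\<Sum>u<n. \<Sum>v<n. r u v * (c u b i * c v a j))) / 2"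
    by (simp add: sum_divide_distrib[symmetric] sum.distrib[symmetric] algebra_simps)
  finally show ?thesis .
qed

lemma tmul_sym_r:
  fixes r :: "nat \<Rightarrow> nat \<Rightarrow> 'k::field_char_0"
  assumes "a < n" "b < n" "i < n" "j < n"
  shows "tmul n c (sym_basis a b) r i j = ((\<Sum>u<n. \<Sum>v<n. r u v * (c a u i * c b v j)) + (\<Sum>u<n. \<Sum>v<n. r u v * (c b u i * c a v j))) / 2"
proof -
  have "tmul n c (sym_basis a b) r i j = (\<Sum>a'<n. \<Sum>b'<n. sym_basis a b a' b' * (\<Sum>u<n. \<Sum>v<n. r u v * (c a' u i * c b' v j)))"
    unfolding tmul_def using assms by (simp add: sum_distrib_left mult_ac)
  also have "\<dots> = ((\<Sum>u<n. \<Sum>v<n. r u v * (c a u i * c b v j)) + (\<Sum>u<n. \<Sum>v<n. r u v * (c b u i * c a v j))) / 2"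
    using assms by (simp add: sym_sum)
  finally show ?thesis .
qed

definition Kc :: "nat \<Rightarrow> (nat \<Rightarrow> nat \<Rightarrow> nat \<Rightarrow> 'k::comm_ring_1) \<Rightarrow> (nat \<Rightarrow> nat \<Rightarrow> 'k) \<Rightarrow> nat \<Rightarrow> nat \<Rightarrow> nat \<Rightarrow> nat \<Rightarrow> 'k" where
  "Kc n c r i j a b = (\<Sum>u<n. \<Sum>v<n. r u v * (c u a i * c v b j - c a u i * c b v j))"

lemma delta_sym:
  fixes r :: "nat \<Rightarrow> nat \<Rightarrow> 'k::field_char_0"
  assumes "a < n" "b < n" "i < n" "j < n"
  shows "delta n c r (sym_basis a b) i j = (Kc n c r i j a b + Kc n c r i j b a) / 2"
  unfolding delta_def tmul_r_sym[OF assms] tmul_sym_r[OF assms] Kc_def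
  by (simp add: sum_subtractf right_diff_distrib field_simps)

lemma Kc_swap:
  assumes sk: "\<forall>i j. r i j = - r j i"
  shows "Kc n c r j i a b = - Kc n c r i j b a"
proof -
  have "Kc n c r j i a b = (\<Sum>u<n. \<Sum>v<n. r v u * (c v a j * c u b i - c a v j * c b u i))"
    unfolding Kc_def by (rule sum.swap)
  also have "\<dots> = - Kc n c r i j b a"
    unfolding Kc_def sum_negf[symmetric]
  proof (intro sum.cong refl)
    fix u v
    have "r v u = - r u v" using sk by blast
    then show "r v u * (c v a j * c u b i - c a v j * c b u i) = - (r u v * (c u b i * c v a j - c b u i * c a v j))"
      by (simp add: algebra_simps)
  qed
  finally show ?thesis .
qed

lemma dd_Kc:
  fixes r :: "nat \<Rightarrow> nat \<Rightarrow> 'k::field_char_0"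
  assumes sk: "\<forall>i j. r i j = - r j i" and "a < n" "b < n" "i < n" "j < n"
  shows "dual_delta n c r i j a b = Kc n c r i j a b + Kc n c r i j b a"
proof -
  have 1: "delta n c r (sym_basis a b) i j = (Kc n c r i j a b + Kc n c r i j b a) / 2" using delta_sym assms by blast
  have 2: "delta n c r (sym_basis a b) j i = (Kc n c r j i a b + Kc n c r j i b a) / 2" using delta_sym assms by blast
  show ?thesis unfolding dual_delta_def 1 2 Kc_swap[OF sk, of n c j i]
    by (simp add: field_simps)
qed



definition bil :: "nat \<Rightarrow> (nat \<Rightarrow> nat \<Rightarrow> 'k::comm_ring_1) \<Rightarrow> 'k mpoly" where
  "bil n \<phi> = (\<Sum>q<n. \<Sum>j<n. Const (\<phi> q j) * (Var q * Var (n + j)))"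

lemma bil_cong: "(\<And>q j. q < n \<Longrightarrow> j < n \<Longrightarrow> \<phi> q j = \<psi> q j) \<Longrightarrow> bil n \<phi> = bil n \<psi>"
  unfolding bil_def by (intro sum.cong refl) auto

lemma lvf_tau: "lvf n z M (\<Sum>i<n. \<Sum>j<n. Const (C i j) * Var i * Var (n + j))
  = (\<Sum>i<n. \<Sum>j<n. Const (C i j) * (lvf n z M (Var i) * Var (n + j) + Var i * lvf n z M (Var (n + j))))"
  by (simp add: lvf_sum lvf_mult mult.assoc)

lemma lvf0_tau: "lvf n 0 M (\<Sum>i<n. \<Sum>j<n. Const (C i j) * Var i * Var (n + j)) = bil n (\<lambda>q j. \<Sum>i<n. C i j * M q i)"
proof -
  have "lvf n 0 M (\<Sum>i<n. \<Sum>j<n. Const (C i j) * Var i * Var (n + j))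
      = (\<Sum>i<n. \<Sum>j<n. \<Sum>q<n. Const (C i j * M q i) * (Var q * Var (n + j)))"
    unfolding lvf_tau by (intro sum.cong refl) (simp add: lvf_Var sum_distrib_left sum_distrib_right Const_mult[symmetric] mult_ac)
  also have "\<dots> = (\<Sum>q<n. \<Sum>i<n. \<Sum>j<n. Const (C i j * M q i) * (Var q * Var (n + j)))"
    by (rule P3c)
  also have "\<dots> = (\<Sum>q<n. \<Sum>j<n. \<Sum>i<n. Const (C i j * M q i) * (Var q * Var (n + j)))"
    by (rule sum.cong[OF refl], rule sum.swap)
  also have "\<dots> = bil n (\<lambda>q j. \<Sum>i<n. C i j * M q i)"
    unfolding bil_def by (simp add: Const_sum sum_distrib_right)
  finally show ?thesis .
qed

lemma lvfn_tau: "lvf n n M (\<Sum>i<n. \<Sum>j<n. Const (C i j) * Var i * Var (n + j)) = bil n (\<lambda>i q. \<Sum>j<n. C i j * M q j)"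
proof -
  have "lvf n n M (\<Sum>i<n. \<Sum>j<n. Const (C i j) * Var i * Var (n + j))
      = (\<Sum>i<n. \<Sum>j<n. \<Sum>q<n. Const (C i j * M q j) * (Var i * Var (n + q)))"
    unfolding lvf_tau by (intro sum.cong refl) (simp add: lvf_Var sum_distrib_left sum_distrib_right Const_mult[symmetric] mult_ac)
  also have "\<dots> = (\<Sum>i<n. \<Sum>q<n. \<Sum>j<n. Const (C i j * M q j) * (Var i * Var (n + q)))"
    by (rule sum.cong[OF refl], rule sum.swap)
  also have "\<dots> = bil n (\<lambda>i q. \<Sum>j<n. C i j * M q j)"
    unfolding bil_def by (simp add: Const_sum sum_distrib_right)
  finally show ?thesis .
qed

abbreviation tau :: "nat \<Rightarrow> (nat \<Rightarrow> nat \<Rightarrow> nat \<Rightarrow> 'k::comm_ring_1) \<Rightarrow> nat \<Rightarrow> 'k mpoly" where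
  "tau n c \<equiv> (\<lambda>k. if k < n then (\<Sum>i<n. \<Sum>j<n. Const (c i j k) * Var i * Var (n + j)) else 0)"

lemma pull_lin: "mult_pullback n c (\<Sum>q<n. Const (\<alpha> q) * Var q) = bil n (\<lambda>i j. \<Sum>q<n. \<alpha> q * c i j q)"
proof -
  have "mult_pullback n c (\<Sum>q<n. Const (\<alpha> q) * Var q) = (\<Sum>q<n. \<Sum>i<n. \<Sum>j<n. Const (\<alpha> q * c i j q) * (Var i * Var (n + j)))"
    unfolding mult_pullback_def by (simp add: subst_sum subst_mult sum_distrib_left Const_mult[symmetric] mult_ac)
  also have "\<dots> = (\<Sum>i<n. \<Sum>j<n. \<Sum>q<n. Const (\<alpha> q * c i j q) * (Var i * Var (n + j)))"
    by (rule P3c[symmetric])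
  also have "\<dots> = bil n (\<lambda>i j. \<Sum>q<n. \<alpha> q * c i j q)"
    unfolding bil_def by (simp add: Const_sum sum_distrib_right)
  finally show ?thesis .
qed

lemma Br_collapse: "Br n c r ng off tp f h = (\<Sum>g<ng. \<Sum>a<n. \<Sum>b<n. Const ((if tp g then 2 else -2) * r a b) * (fam n c off tp (g, a) f * fam n c off tp (g, b) h))"
proof -
  have "Br n c r ng off tp f h = (\<Sum>g<ng. \<Sum>a<n. \<Sum>g2<ng. \<Sum>b<n. lam r tp (g, a) (g2, b) * (fam n c off tp (g, a) f * fam n c off tp (g2, b) h))"
    unfolding Br_def by (simp only: sum_prod)
  also have "\<dots> = (\<Sum>g<ng. \<Sum>a<n. \<Sum>b<n. Const ((if tp g then 2 else -2) * r a b) * (fam n c off tp (g, a) f * fam n c off tp (g, b) h))"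
  proof (rule sum.cong[OF refl], rule sum.cong[OF refl])
    fix g a assume g: "g \<in> {..<ng}"
    have "(\<Sum>g2<ng. \<Sum>b<n. lam r tp (g, a) (g2, b) * (fam n c off tp (g, a) f * fam n c off tp (g2, b) h))
      = (\<Sum>g2<ng. if g2 = g then (\<Sum>b<n. Const ((if tp g then 2 else -2) * r a b) * (fam n c off tp (g, a) f * fam n c off tp (g, b) h)) else 0)"
      by (intro sum.cong refl) (auto simp: lam_def)
    also have "\<dots> = (\<Sum>b<n. Const ((if tp g then 2 else -2) * r a b) * (fam n c off tp (g, a) f * fam n c off tp (g, b) h))"
      using g by simp
    finally show "(\<Sum>g2<ng. \<Sum>b<n. lam r tp (g, a) (g2, b) * (fam n c off tp (g, a) f * fam n c off tp (g2, b) h))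
      = (\<Sum>b<n. Const ((if tp g then 2 else -2) * r a b) * (fam n c off tp (g, a) f * fam n c off tp (g, b) h))" .
  qed
  finally show ?thesis .
qed

definition Qz :: "nat \<Rightarrow> (nat \<Rightarrow> nat \<Rightarrow> nat \<Rightarrow> 'k::comm_ring_1) \<Rightarrow> (nat \<Rightarrow> nat \<Rightarrow> 'k) \<Rightarrow> nat \<Rightarrow> nat \<Rightarrow> nat \<Rightarrow> 'k mpoly" where
  "Qz n c r z i j = (\<Sum>a<n. \<Sum>b<n. Const (2 * r a b) * ((\<Sum>q<n. Const (c a q i) * Var (z + q)) * (\<Sum>q<n. Const (c b q j) * Var (z + q)))
      + Const (- 2 * r a b) * ((\<Sum>q<n. Const (c q a i) * Var (z + q)) * (\<Sum>q<n. Const (c q b j) * Var (z + q))))"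

lemma sum2_lessThan: "(\<Sum>g<(2::nat). f g) = f 0 + (f 1 :: 'a::comm_monoid_add)"
  by (simp add: numeral_2_eq_2)
lemma sum4_lessThan: "(\<Sum>g<(4::nat). f g) = f 0 + f 1 + f 2 + (f 3 :: 'a::comm_monoid_add)"
  by (simp add: eval_nat_numeral add_ac)

lemma B1_Var: "Br n c r 2 (\<lambda>_. 0) (\<lambda>g. g = 0) (Var v) (Var w) = (if v < n \<and> w < n then Qz n c r 0 v w else 0)"
  unfolding Br_collapse sum2_lessThan Qz_def
  by (cases "v < n"; cases "w < n") (simp_all add: fam_def lvf_Var mat_def sum.distrib[symmetric] algebra_simps)

lemma B2_Var: "Br n c r 4 (\<lambda>g. if g < 2 then 0 else n) (\<lambda>g. g = 0 \<or> g = 2) (Var v) (Var w)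
  = (if v < n \<and> w < n then Qz n c r 0 v w else if n \<le> v \<and> v < 2 * n \<and> n \<le> w \<and> w < 2 * n then Qz n c r n (v - n) (w - n) else 0)"
  unfolding Br_collapse sum4_lessThan Qz_def
  by (cases "v < n"; cases "w < n"; cases "v < 2 * n"; cases "w < 2 * n") (simp_all add: fam_def lvf_Var mat_def sum.distrib[symmetric] algebra_simps)



lemma prod_lin: "(\<Sum>q<n. Const (\<alpha> q) * X q) * (\<Sum>q<n. Const (\<beta> q) * X q) = (\<Sum>q<n. \<Sum>q'<n. Const (\<alpha> q * \<beta> q') * (X q * X q'))"
  unfolding sum_distrib_right unfolding sum_distrib_left
  by (intro sum.cong refl) (simp add: Const_mult[symmetric] mult_ac)

lemma const_comb: "Const a * (Const b * X) + Const a' * (Const b' * X) = Const (a * b + a' * b') * (X :: 'k::comm_ring_1 mpoly)"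
  by (simp add: Const_add Const_mult[symmetric] algebra_simps)

lemma Qz_Kc: "Qz n c r z i j = (\<Sum>q<n. \<Sum>q'<n. Const (2 * Kc n c r i j q q') * (Var (z + q) * Var (z + q')))"
proof -
  have "Qz n c r z i j = (\<Sum>a<n. \<Sum>b<n. \<Sum>q<n. \<Sum>q'<n. Const (2 * r a b * (c a q i * c b q' j) + (- 2 * r a b) * (c q a i * c q' b j)) * (Var (z + q) * Var (z + q')))"
    unfolding Qz_def prod_lin
    by (intro sum.cong refl) (simp only: sum_distrib_left sum.distrib[symmetric] const_comb)
  also have "\<dots> = (\<Sum>q<n. \<Sum>q'<n. \<Sum>a<n. \<Sum>b<n. Const (2 * r a b * (c a q i * c b q' j) + (- 2 * r a b) * (c q a i * c q' b j)) * (Var (z + q) * Var (z + q')))"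
    by (rule P4c)
  also have "\<dots> = (\<Sum>q<n. \<Sum>q'<n. Const (2 * Kc n c r i j q q') * (Var (z + q) * Var (z + q')))"
  proof (intro sum.cong refl)
    fix q q'
    have h: "(\<Sum>a<n. \<Sum>b<n. 2 * r a b * (c a q i * c b q' j) + (- 2 * r a b) * (c q a i * c q' b j)) = 2 * Kc n c r i j q q'"
      unfolding Kc_def sum_distrib_left by (intro sum.cong refl) (simp add: algebra_simps)
    show "(\<Sum>a<n. \<Sum>b<n. Const (2 * r a b * (c a q i * c b q' j) + (- 2 * r a b) * (c q a i * c q' b j)) * (Var (z + q) * Var (z + q')))
      = Const (2 * Kc n c r i j q q') * (Var (z + q) * Var (z + q'))"
      unfolding h[symmetric] by (simp only: Const_sum sum_distrib_right)
  qed
  finally show ?thesis .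
qed

lemma quad_dd:
  fixes r :: "nat \<Rightarrow> nat \<Rightarrow> 'k::field_char_0"
  assumes sk: "\<forall>i j. r i j = - r j i" and ij: "i < n" "j < n"
  shows "(\<Sum>a<n. \<Sum>b<n. Const (dual_delta n c r i j a b) * Var (z + a) * Var (z + b))
     = (\<Sum>a<n. \<Sum>b<n. Const (2 * Kc n c r i j a b) * (Var (z + a) * Var (z + b)))"
proof -
  have "(\<Sum>a<n. \<Sum>b<n. Const (dual_delta n c r i j a b) * Var (z + a) * Var (z + b))
     = (\<Sum>a<n. \<Sum>b<n. Const (Kc n c r i j a b) * (Var (z + a) * Var (z + b))) + (\<Sum>a<n. \<Sum>b<n. Const (Kc n c r i j b a) * (Var (z + a) * Var (z + b)))"
    unfolding sum.distrib[symmetric] by (intro sum.cong refl) (simp add: dd_Kc[OF sk _ _ ij] Const_add distrib_right mult.assoc)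
  also have "(\<Sum>a<n. \<Sum>b<n. Const (Kc n c r i j b a) * (Var (z + a) * Var (z + b))) = (\<Sum>a<n. \<Sum>b<n. Const (Kc n c r i j a b) * (Var (z + a) * Var (z + b)))"
  proof -
    have "(\<Sum>a<n. \<Sum>b<n. Const (Kc n c r i j b a) * (Var (z + a) * Var (z + b))) = (\<Sum>b<n. \<Sum>a<n. Const (Kc n c r i j b a) * (Var (z + a) * Var (z + b)))"
      by (rule sum.swap)
    also have "\<dots> = (\<Sum>b<n. \<Sum>a<n. Const (Kc n c r i j b a) * (Var (z + b) * Var (z + a)))"
      by (intro sum.cong refl) (subst mult.commute[of "Var _" "Var _"], rule refl)
    finally show ?thesis .
  qed
  also have "(\<Sum>a<n. \<Sum>b<n. Const (Kc n c r i j a b) * (Var (z + a) * Var (z + b))) + (\<Sum>a<n. \<Sum>b<n. Const (Kc n c r i j a b) * (Var (z + a) * Var (z + b)))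
     = (\<Sum>a<n. \<Sum>b<n. Const (2 * Kc n c r i j a b) * (Var (z + a) * Var (z + b)))"
    by (simp only: mult_2 Const_add distrib_right sum.distrib)
  finally show ?thesis .
qed

lemma lin_eq:
  fixes r :: "nat \<Rightarrow> nat \<Rightarrow> 'k::field_char_0"
  assumes sk: "\<forall>i j. r i j = - r j i" and ij: "i < n" "j < n"
  shows "lin_bracket n c r i j = Qz n c r 0 i j"
  using quad_dd[OF sk ij, where z=0 and c=c] unfolding lin_bracket_def Qz_Kc by simp

lemma shift_eq:
  fixes r :: "nat \<Rightarrow> nat \<Rightarrow> 'k::field_char_0"
  assumes sk: "\<forall>i j. r i j = - r j i" and ij: "i < n" "j < n"
  shows "shift n (lin_bracket n c r i j) = Qz n c r n i j"
  using quad_dd[OF sk ij, where z=n and c=c] unfolding lin_bracket_def Qz_Kc shift_def by (simp add: subst_sum subst_mult)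



lemma pull_add: "mult_pullback n c (p + q) = mult_pullback n c p + mult_pullback n c q"
  unfolding mult_pullback_def by (rule subst_add)
lemma pull_mult: "mult_pullback n c (p * q) = mult_pullback n c p * mult_pullback n c q"
  unfolding mult_pullback_def by (rule subst_mult)
lemma pull_Const: "mult_pullback n c (Const a) = Const a"
  unfolding mult_pullback_def by simp
lemma pull_zero: "mult_pullback n c 0 = 0"
  unfolding mult_pullback_def by simp
lemma pull_Var: "mult_pullback n c (Var k) = tau n c k"
  unfolding mult_pullback_def by simp

lemma Br_add_left: "Br n c r ng off tp (p + q) h = Br n c r ng off tp p h + Br n c r ng off tp q h"
  unfolding Br_def by (simp add: fam_add sum.distrib[symmetric] algebra_simps)
lemma Br_add_right: "Br n c r ng off tp h (p + q) = Br n c r ng off tp h p + Br n c r ng off tp h q"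
  unfolding Br_def by (simp add: fam_add sum.distrib[symmetric] algebra_simps)
lemma Br_mult_right: "Br n c r ng off tp p (q * s) = Br n c r ng off tp p q * s + q * Br n c r ng off tp p s"
  unfolding Br_def by (simp add: fam_mult sum_distrib_left sum_distrib_right sum.distrib[symmetric] algebra_simps)
lemma Br_mult_left: "Br n c r ng off tp (q * s) p = Br n c r ng off tp q p * s + q * Br n c r ng off tp s p"
  unfolding Br_def by (simp add: fam_mult sum_distrib_left sum_distrib_right sum.distrib[symmetric] algebra_simps)
lemma Br_Const_left: "Br n c r ng off tp (Const a) p = 0"
  unfolding Br_def by (simp add: fam_def)
lemma Br_Const_right: "Br n c r ng off tp p (Const a) = 0"
  unfolding Br_def by (simp add: fam_def)
lemma Br_zero_left: "Br n c r ng off tp 0 p = 0"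
  using Br_Const_left[where a=0] by simp

lemma hom_deriv_unique:
  fixes \<Phi> \<Psi> h :: "'k::comm_ring_1 mpoly \<Rightarrow> 'k mpoly"
  assumes "\<And>p q. \<Phi> (p + q) = \<Phi> p + \<Phi> q" "\<And>p q. \<Phi> (p * q) = \<Phi> p * h q + h p * \<Phi> q" "\<And>a. \<Phi> (Const a) = 0"
    and "\<And>p q. \<Psi> (p + q) = \<Psi> p + \<Psi> q" "\<And>p q. \<Psi> (p * q) = \<Psi> p * h q + h p * \<Psi> q" "\<And>a. \<Psi> (Const a) = 0"
    and "\<And>v. \<Phi> (Var v) = \<Psi> (Var v)"
  shows "\<Phi> f = \<Psi> f"
  by (induction f rule: poly_induct) (simp_all add: assms)

lemma pull_sum: "mult_pullback n c (sum f A) = (\<Sum>x\<in>A. mult_pullback n c (f x))"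
  unfolding mult_pullback_def by (rule subst_sum)

lemma K1:
  assumes A: "assoc_alg n c" and v: "v < n" and a: "a < n"
  shows "fam n c (\<lambda>g. if g < 2 then 0 else n) (\<lambda>g. g = 0 \<or> g = 2) (0, a) (\<Sum>i<n. \<Sum>j<n. Const (c i j v) * Var i * Var (n + j))
       = mult_pullback n c (fam n c (\<lambda>_. 0) (\<lambda>g. g = 0) (0, a) (Var v))"
proof -
  have "fam n c (\<lambda>g. if g < 2 then 0 else n) (\<lambda>g. g = 0 \<or> g = 2) (0, a) (\<Sum>i<n. \<Sum>j<n. Const (c i j v) * Var i * Var (n + j))
      = lvf n 0 (mat c True a) (\<Sum>i<n. \<Sum>j<n. Const (c i j v) * Var i * Var (n + j))"
    using v by (simp add: fam_def)
  also have "\<dots> = bil n (\<lambda>q j. \<Sum>i<n. c i j v * mat c True a q i)" by (rule lvf0_tau)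
  also have "\<dots> = bil n (\<lambda>q j. \<Sum>u<n. c a u v * c q j u)"
  proof (rule bil_cong)
    fix q j assume "q < n" "j < n"
    then have "(\<Sum>u<n. c a q u * c u j v) = (\<Sum>u<n. c q j u * c a u v)" using assoc_coord[OF A a] v by blast
    then show "(\<Sum>i<n. c i j v * mat c True a q i) = (\<Sum>u<n. c a u v * c q j u)"
      by (simp add: mat_def mult.commute)
  qed
  also have "\<dots> = mult_pullback n c (\<Sum>q<n. Const (c a q v) * Var q)" by (rule pull_lin[symmetric])
  also have "\<dots> = mult_pullback n c (fam n c (\<lambda>_. 0) (\<lambda>g. g = 0) (0, a) (Var v))"
    using v by (simp add: fam_def lvf_Var mat_def)
  finally show ?thesis .
qed

lemma K2:
  assumes A: "assoc_alg n c" and v: "v < n" and a: "a < n"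
  shows "fam n c (\<lambda>g. if g < 2 then 0 else n) (\<lambda>g. g = 0 \<or> g = 2) (3, a) (\<Sum>i<n. \<Sum>j<n. Const (c i j v) * Var i * Var (n + j))
       = mult_pullback n c (fam n c (\<lambda>_. 0) (\<lambda>g. g = 0) (1, a) (Var v))"
proof -
  have "fam n c (\<lambda>g. if g < 2 then 0 else n) (\<lambda>g. g = 0 \<or> g = 2) (3, a) (\<Sum>i<n. \<Sum>j<n. Const (c i j v) * Var i * Var (n + j))
      = lvf n n (mat c False a) (\<Sum>i<n. \<Sum>j<n. Const (c i j v) * Var i * Var (n + j))"
    using v by (simp add: fam_def)
  also have "\<dots> = bil n (\<lambda>i q. \<Sum>j<n. c i j v * mat c False a q j)" by (rule lvfn_tau)
  also have "\<dots> = bil n (\<lambda>i q. \<Sum>u<n. c u a v * c i q u)"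
  proof (rule bil_cong)
    fix i q assume iq: "i < n" "q < n"
    then have "(\<Sum>u<n. c i q u * c u a v) = (\<Sum>u<n. c q a u * c i u v)" using assoc_coord[OF A iq a v] by blast
    then show "(\<Sum>j<n. c i j v * mat c False a q j) = (\<Sum>u<n. c u a v * c i q u)"
      by (simp add: mat_def mult.commute)
  qed
  also have "\<dots> = mult_pullback n c (\<Sum>q<n. Const (c q a v) * Var q)" by (rule pull_lin[symmetric])
  also have "\<dots> = mult_pullback n c (fam n c (\<lambda>_. 0) (\<lambda>g. g = 0) (1, a) (Var v))"
    using v by (simp add: fam_def lvf_Var mat_def)
  finally show ?thesis .
qed

lemma K3:
  assumes A: "assoc_alg n c" and v: "v < n" and a: "a < n"
  shows "fam n c (\<lambda>g. if g < 2 then 0 else n) (\<lambda>g. g = 0 \<or> g = 2) (1, a) (\<Sum>i<n. \<Sum>j<n. Const (c i j v) * Var i * Var (n + j))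
       = fam n c (\<lambda>g. if g < 2 then 0 else n) (\<lambda>g. g = 0 \<or> g = 2) (2, a) (\<Sum>i<n. \<Sum>j<n. Const (c i j v) * Var i * Var (n + j))"
proof -
  have "fam n c (\<lambda>g. if g < 2 then 0 else n) (\<lambda>g. g = 0 \<or> g = 2) (1, a) (\<Sum>i<n. \<Sum>j<n. Const (c i j v) * Var i * Var (n + j))
      = lvf n 0 (mat c False a) (\<Sum>i<n. \<Sum>j<n. Const (c i j v) * Var i * Var (n + j))"
    using v by (simp add: fam_def)
  also have "\<dots> = bil n (\<lambda>q j. \<Sum>i<n. c i j v * mat c False a q i)" by (rule lvf0_tau)
  also have "\<dots> = bil n (\<lambda>i q. \<Sum>j<n. c i j v * mat c True a q j)"
  proof (rule bil_cong)
    fix x y assume xy: "x < n" "y < n"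
    then have "(\<Sum>u<n. c x a u * c u y v) = (\<Sum>u<n. c a y u * c x u v)" using assoc_coord[OF A _ a _ v] by blast
    then show "(\<Sum>i<n. c i y v * mat c False a x i) = (\<Sum>j<n. c x j v * mat c True a y j)"
      by (simp add: mat_def mult.commute)
  qed
  also have "\<dots> = lvf n n (mat c True a) (\<Sum>i<n. \<Sum>j<n. Const (c i j v) * Var i * Var (n + j))" by (rule lvfn_tau[symmetric])
  also have "\<dots> = fam n c (\<lambda>g. if g < 2 then 0 else n) (\<lambda>g. g = 0 \<or> g = 2) (2, a) (\<Sum>i<n. \<Sum>j<n. Const (c i j v) * Var i * Var (n + j))"
    using v by (simp add: fam_def)
  finally show ?thesis .
qed

lemma gen:
  assumes A: "assoc_alg n c" and v: "v < n" and w: "w < n"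
  shows "Br n c r 4 (\<lambda>g. if g < 2 then 0 else n) (\<lambda>g. g = 0 \<or> g = 2) (tau n c v) (tau n c w)
       = mult_pullback n c (Br n c r 2 (\<lambda>_. 0) (\<lambda>g. g = 0) (Var v) (Var w))"
proof -
  let ?off = "\<lambda>g::nat. if g < 2 then 0 else n" and ?tp = "\<lambda>g::nat. g = 0 \<or> g = 2"
  define T where "T x = (\<Sum>i<n. \<Sum>j<n. Const (c i j x) * Var i * Var (n + j))" for x
  have tv: "tau n c v = T v" "tau n c w = T w" using v w by (simp_all add: T_def)
  define F4 where "F4 g a x = fam n c ?off ?tp (g, a) (T x)" for g a x
  define F2 where "F2 g a x = fam n c (\<lambda>_. 0) (\<lambda>g. g = 0) (g, a) (Var x)" for g a x
  let ?P = "mult_pullback n c"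
  have k1: "F4 0 a x = ?P (F2 0 a x)" if "a < n" "x < n" for a x
    unfolding F4_def F2_def T_def using K1[OF A that(2) that(1)] .
  have k2: "F4 3 a x = ?P (F2 1 a x)" if "a < n" "x < n" for a x
    unfolding F4_def F2_def T_def using K2[OF A that(2) that(1)] .
  have k3: "F4 1 a x = F4 2 a x" if "a < n" "x < n" for a x
    unfolding F4_def T_def using K3[OF A that(2) that(1)] .
  have k3': "F4 (Suc 0) a x = F4 2 a x" if "a < n" "x < n" for a x
    using k3[OF that] by simp
  have "Br n c r 4 ?off ?tp (tau n c v) (tau n c w)
     = (\<Sum>a<n. \<Sum>b<n. Const ((if ?tp 0 then 2 else -2) * r a b) * (F4 0 a v * F4 0 b w))
     + (\<Sum>a<n. \<Sum>b<n. Const ((if ?tp 1 then 2 else -2) * r a b) * (F4 1 a v * F4 1 b w))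
     + (\<Sum>a<n. \<Sum>b<n. Const ((if ?tp 2 then 2 else -2) * r a b) * (F4 2 a v * F4 2 b w))
     + (\<Sum>a<n. \<Sum>b<n. Const ((if ?tp 3 then 2 else -2) * r a b) * (F4 3 a v * F4 3 b w))"
    unfolding Br_collapse sum4_lessThan tv F4_def ..
  also have "\<dots> = (\<Sum>a<n. \<Sum>b<n. Const (2 * r a b) * (?P (F2 0 a v) * ?P (F2 0 b w)))
     + (\<Sum>a<n. \<Sum>b<n. Const (- 2 * r a b) * (?P (F2 1 a v) * ?P (F2 1 b w)))"
  proof -
    have e0: "(\<Sum>a<n. \<Sum>b<n. Const ((if ?tp 0 then 2 else -2) * r a b) * (F4 0 a v * F4 0 b w))
      = (\<Sum>a<n. \<Sum>b<n. Const (2 * r a b) * (?P (F2 0 a v) * ?P (F2 0 b w)))"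
      by (intro sum.cong refl) (simp add: k1 v w)
    have e3: "(\<Sum>a<n. \<Sum>b<n. Const ((if ?tp 3 then 2 else -2) * r a b) * (F4 3 a v * F4 3 b w))
      = (\<Sum>a<n. \<Sum>b<n. Const (- 2 * r a b) * (?P (F2 1 a v) * ?P (F2 1 b w)))"
      by (intro sum.cong refl) (simp add: k2 v w)
    have e12: "(\<Sum>a<n. \<Sum>b<n. Const ((if ?tp 1 then 2 else -2) * r a b) * (F4 1 a v * F4 1 b w))
      + (\<Sum>a<n. \<Sum>b<n. Const ((if ?tp 2 then 2 else -2) * r a b) * (F4 2 a v * F4 2 b w)) = 0"
      unfolding sum.distrib[symmetric] by (intro sum.neutral ballI) (simp add: k3 k3' v w Const_uminus)
    show ?thesis using e0 e3 e12 by (simp add: algebra_simps)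
  qed
  also have "\<dots> = ?P (Br n c r 2 (\<lambda>_. 0) (\<lambda>g. g = 0) (Var v) (Var w))"
    unfolding Br_collapse sum2_lessThan F2_def by (simp add: pull_add pull_sum pull_mult pull_Const)
  finally show ?thesis .
qed

lemma Br_zero_right: "Br n c r ng off tp p 0 = 0"
  using Br_Const_right[where a=0] by simp

lemma compat:
  assumes A: "assoc_alg n c"
  shows "Br n c r 4 (\<lambda>g. if g < 2 then 0 else n) (\<lambda>g. g = 0 \<or> g = 2) (mult_pullback n c f) (mult_pullback n c g)
       = mult_pullback n c (Br n c r 2 (\<lambda>_. 0) (\<lambda>g. g = 0) f g)"
proof -
  let ?B2 = "Br n c r 4 (\<lambda>g. if g < 2 then 0 else n) (\<lambda>g. g = 0 \<or> g = 2)"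
  let ?B1 = "Br n c r 2 (\<lambda>_. 0) (\<lambda>g::nat. g = 0)"
  let ?P = "mult_pullback n c"
  have gv: "?B2 (?P (Var v)) (?P (Var w)) = ?P (?B1 (Var v) (Var w))" for v w
  proof (cases "v < n \<and> w < n")
    case True then show ?thesis using gen[OF A] by (simp add: pull_Var)
  next
    case False
    then have "?B1 (Var v) (Var w) = 0" unfolding B1_Var by auto
    moreover have "?B2 (?P (Var v)) (?P (Var w)) = 0"
      using False by (auto simp: pull_Var Br_zero_left Br_zero_right)
    ultimately show ?thesis by (simp add: pull_zero)
  qed
  have step: "?B2 (?P (Var v)) (?P h) = ?P (?B1 (Var v) h)" for v h
  proof (rule hom_deriv_unique[where h = ?P and \<Phi> = "\<lambda>h. ?B2 (?P (Var v)) (?P h)" and \<Psi> = "\<lambda>h. ?P (?B1 (Var v) h)"])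
    show "?B2 (?P (Var v)) (?P (p + q)) = ?B2 (?P (Var v)) (?P p) + ?B2 (?P (Var v)) (?P q)" for p q
      by (simp add: pull_add Br_add_right)
    show "?B2 (?P (Var v)) (?P (p * q)) = ?B2 (?P (Var v)) (?P p) * ?P q + ?P p * ?B2 (?P (Var v)) (?P q)" for p q
      by (simp add: pull_mult Br_mult_right)
    show "?B2 (?P (Var v)) (?P (Const a)) = 0" for a by (simp add: pull_Const Br_Const_right)
    show "?P (?B1 (Var v) (p + q)) = ?P (?B1 (Var v) p) + ?P (?B1 (Var v) q)" for p q
      by (simp add: pull_add Br_add_right)
    show "?P (?B1 (Var v) (p * q)) = ?P (?B1 (Var v) p) * ?P q + ?P p * ?P (?B1 (Var v) q)" for p q
      by (simp add: pull_add pull_mult Br_mult_right)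
    show "?P (?B1 (Var v) (Const a)) = 0" for a by (simp add: pull_zero Br_Const_right)
    show "?B2 (?P (Var v)) (?P (Var w)) = ?P (?B1 (Var v) (Var w))" for w by (rule gv)
  qed
  show ?thesis
  proof (rule hom_deriv_unique[where h = ?P and \<Phi> = "\<lambda>f. ?B2 (?P f) (?P g)" and \<Psi> = "\<lambda>f. ?P (?B1 f g)"])
    show "?B2 (?P (p + q)) (?P g) = ?B2 (?P p) (?P g) + ?B2 (?P q) (?P g)" for p q
      by (simp add: pull_add Br_add_left)
    show "?B2 (?P (p * q)) (?P g) = ?B2 (?P p) (?P g) * ?P q + ?P p * ?B2 (?P q) (?P g)" for p q
      by (simp add: pull_mult Br_mult_left)
    show "?B2 (?P (Const a)) (?P g) = 0" for a by (simp add: pull_Const Br_Const_left)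
    show "?P (?B1 (p + q) g) = ?P (?B1 p g) + ?P (?B1 q g)" for p q
      by (simp add: pull_add Br_add_left)
    show "?P (?B1 (p * q) g) = ?P (?B1 p g) * ?P q + ?P p * ?P (?B1 q g)" for p q
      by (simp add: pull_add pull_mult Br_mult_left)
    show "?P (?B1 (Const a) g) = 0" for a by (simp add: pull_zero Br_Const_left)
    show "?B2 (?P (Var v)) (?P g) = ?P (?B1 (Var v) g)" for v by (rule step)
  qed
qed

lemma P4d: "(\<Sum>a\<in>A. \<Sum>b\<in>B. \<Sum>c\<in>C. \<Sum>d\<in>D. f a b c d) = (\<Sum>b\<in>B. \<Sum>a\<in>A. \<Sum>d\<in>D. \<Sum>c\<in>C. f a b c d)"
proof -
  have "(\<Sum>a\<in>A. \<Sum>b\<in>B. \<Sum>c\<in>C. \<Sum>d\<in>D. f a b c d) = (\<Sum>b\<in>B. \<Sum>a\<in>A. \<Sum>c\<in>C. \<Sum>d\<in>D. f a b c d)"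
    by (rule sum.swap)
  also have "\<dots> = (\<Sum>b\<in>B. \<Sum>a\<in>A. \<Sum>d\<in>D. \<Sum>c\<in>C. f a b c d)"
    by (rule sum.cong[OF refl], rule sum.cong[OF refl], rule sum.swap)
  finally show ?thesis .
qed

lemma tmul_flip:
  assumes "\<forall>a b. Y b a = s1 * Y a b" "\<forall>a b. Z b a = s2 * Z a b"
  shows "tmul n c Y Z j i = s1 * s2 * tmul n c Y Z i j"
proof (cases "i < n \<and> j < n")
  case True
  have "tmul n c Y Z j i = (\<Sum>a<n. \<Sum>b<n. \<Sum>a'<n. \<Sum>b'<n. Y a b * Z a' b' * c a a' j * c b b' i)"
    using True unfolding tmul_def by simp
  also have "\<dots> = (\<Sum>b<n. \<Sum>a<n. \<Sum>b'<n. \<Sum>a'<n. Y a b * Z a' b' * c a a' j * c b b' i)"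
    by (rule P4d)
  also have "\<dots> = (\<Sum>b<n. \<Sum>a<n. \<Sum>b'<n. \<Sum>a'<n. s1 * s2 * (Y b a * Z b' a' * c b b' i * c a a' j))"
  proof (intro sum.cong refl)
    fix a b a' b'
    have "Y a b = s1 * Y b a" "Z a' b' = s2 * Z b' a'" using assms by blast+
    then show "Y a b * Z a' b' * c a a' j * c b b' i = s1 * s2 * (Y b a * Z b' a' * c b b' i * c a a' j)"
      by (simp add: mult_ac)
  qed
  also have "\<dots> = s1 * s2 * tmul n c Y Z i j"
    using True unfolding tmul_def by (simp add: sum_distrib_left)
  finally show ?thesis .
next
  case False
  then show ?thesis unfolding tmul_def by auto
qed

lemma delta_skew:
  assumes sk: "\<forall>i j. r i j = - r j i" and X: "symm_tensor n X"
  shows "skew_tensor n (delta n c r X)"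
proof -
  have sk': "\<forall>a b. r b a = (-1) * r a b"
  proof (intro allI)
    fix a b have "r b a = - r a b" using sk by blast
    then show "r b a = (-1) * r a b" by simp
  qed
  have X': "\<forall>a b. X b a = 1 * X a b"
  proof (intro allI)
    fix a b have "X b a = X a b" using X unfolding symm_tensor_def by blast
    then show "X b a = 1 * X a b" by simp
  qed
  have 1: "delta n c r X j i = - delta n c r X i j" for i j
  proof -
    have a: "tmul n c r X j i = - tmul n c r X i j" using tmul_flip[OF sk' X', where i=i and j=j and n=n and c=c] by simp
    have b: "tmul n c X r j i = - tmul n c X r i j" using tmul_flip[OF X' sk', where i=i and j=j and n=n and c=c] by simp
    show ?thesis unfolding delta_def a b by simp
  qed
  have 2: "delta n c r X i j = 0" if "n \<le> i \<or> n \<le> j" for i j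
    using that unfolding delta_def tmul_def by auto
  show ?thesis unfolding skew_tensor_def using 1 2 by blast
qed

theorem corollary7:
  fixes n :: nat
    and c :: "nat \<Rightarrow> nat \<Rightarrow> nat \<Rightarrow> 'k::real_or_complex"
    and G :: "(nat \<Rightarrow> 'k) set"
    and r :: "nat \<Rightarrow> nat \<Rightarrow> 'k"
  assumes "assoc_alg n c"
    and "lie_subalgebra n c G"
    and "in_wedge G r"
    and "CYBE n c r"
  shows "(\<forall>X. symm_tensor n X \<longrightarrow> skew_tensor n (delta n c r X))
       \<and> (\<exists>B B2. poisson_bracket B \<and> brackets_on_A n c r B
               \<and> poisson_bracket B2 \<and> brackets_on_AxA n c r B2
               \<and> (\<forall>f g. B2 (mult_pullback n c f) (mult_pullback n c g) = mult_pullback n c (B f g)))"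
proof -
  have A: "assoc_alg n c" and cy: "CYBE n c r" using assms by auto
  have sk: "\<forall>i j. r i j = - r j i" using assms(3) unfolding in_wedge_def by blast
  let ?B = "Br n c r 2 (\<lambda>_. 0) (\<lambda>g::nat. g = 0)"
  let ?B2 = "Br n c r 4 (\<lambda>g::nat. if g < 2 then 0 else n) (\<lambda>g::nat. g = 0 \<or> g = 2)"
  have p1: "poisson_bracket ?B"
    by (rule Br_poisson[OF A sk cy]) auto
  have p2: "poisson_bracket ?B2"
    by (rule Br_poisson[OF A sk cy]) auto
  have b1: "brackets_on_A n c r ?B"
    unfolding brackets_on_A_def B1_Var using lin_eq[OF sk] by auto
  have b2: "brackets_on_AxA n c r ?B2"
    unfolding brackets_on_AxA_def B2_Var using lin_eq[OF sk] shift_eq[OF sk] by auto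
  have cm: "\<forall>f g. ?B2 (mult_pullback n c f) (mult_pullback n c g) = mult_pullback n c (?B f g)"
    using compat[OF A] by blast
  have d: "\<forall>X. symm_tensor n X \<longrightarrow> skew_tensor n (delta n c r X)"
    using delta_skew[OF sk] by blast
  show ?thesis using d p1 p2 b1 b2 cm by blast
qed


end
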